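(* Let $(u,x)$ be an enhanced state of an oriented link diagram $D$ with $q(u,x)=j_{\max}(D)-2$. Then $\Phi(u)\le 1$. Moreover, if $\Phi(u)=0$ then $x=x_z^+$ for some $z\in Z(u)$, and if $\Phi(u)=1$ then $x=x_+$.
   Context: $D$ is an oriented link diagram with ordered crossings $c_1,\dots,c_n$, $n_+$ positive and $n_-$ negative. A state is $u\in\{0,1\}^n$, $|u|=\sum u_i$, $\vec1=(1,\dots,1)$; $u\succ_i v$ means $u_i=1,v_i=0$, $u_j=v_j$ otherwise. $D(u)$ is obtained by smoothing each $c_i$ by its Kauffman $u_i$-smoothing; $Z(u)$ is its set of circles; going from $u$ to $v$ with $u\succ_i v$ is surgery along the chord of $c_i$, a merging if that chord joins two different circles. $\Phi(u)$ is the number of mergings in any chain $\vec1=u_0\succ u_1\succ\cdots\succ u_k=u$. An enhancement is a map $x\colon Z(u)\to\{\pm1\}$, $Z_\pm(u,x)$ the circles labelled $\pm1$; $q(u,x)=n_+-2n_-+|u|+|Z_+(u,x)|-|Z_-(u,x)|$; $j_{\max}(D)=\max q(u,x)$. $x_+$ is the constant enhancement $+1$, and for $z\in Z(u)$, $x_z^+$ assigns $-1$ to $z$ and $+1$ to every other circle. *)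

theory Defs
  imports Main
begin

text \<open>
Combinatorial model of an oriented link diagram D with crossings c_0,...,c_(n-1)
(0-based indices).  Each crossing i has four endpoints (i,0),(i,1),(i,2),(i,3),
listed counterclockwise (seen from above): the under-strand runs through (i,0) and
(i,2) and is oriented (i,0) -> (i,2); the over-strand runs through (i,1) and (i,3),
oriented (i,3) -> (i,1) iff the crossing is positive.  The arcs of the diagram
(pieces of strands between crossings) form a fixed-point-free involution on
endpoints.  Crossingless closed components are counted by nfree.  Planarity of the
underlying 4-valent map (rotation (i,k) -> (i,k+1 mod 4)) is imposed by Euler's
formula: faces = vertices + 2 * (number of connected components).
\<close>

record diagram =
  ncr   :: nat
  arc   :: "nat \<times> nat \<Rightarrow> nat \<times> nat"
  pos   :: "nat \<Rightarrow> bool"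
  nfree :: nat

definition endpoints :: "diagram \<Rightarrow> (nat \<times> nat) set" where
  "endpoints D = {0..<ncr D} \<times> {0..<4}"

definition is_out :: "diagram \<Rightarrow> nat \<times> nat \<Rightarrow> bool" where
  "is_out D e \<longleftrightarrow> snd e = 2 \<or> snd e = (if pos D (fst e) then 1 else 3)"

definition rot :: "nat \<times> nat \<Rightarrow> nat \<times> nat" where
  "rot e = (fst e, (snd e + 1) mod 4)"

definition face_perm :: "diagram \<Rightarrow> nat \<times> nat \<Rightarrow> nat \<times> nat" where
  "face_perm D e = rot (arc D e)"

definition num_faces :: "diagram \<Rightarrow> nat" where
  "num_faces D = card (endpoints D // {(e, f). \<exists>m. (face_perm D ^^ m) e = f})"

definition crossing_adj :: "diagram \<Rightarrow> (nat \<times> nat) set" where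
  "crossing_adj D = {(i, j). \<exists>k<4. i < ncr D \<and> fst (arc D (i, k)) = j}"

definition num_components :: "diagram \<Rightarrow> nat" where
  "num_components D =
     card ({0..<ncr D} // ((crossing_adj D \<union> (crossing_adj D)\<inverse>)\<^sup>*))"

definition diagram :: "diagram \<Rightarrow> bool" where
  "diagram D \<longleftrightarrow>
     (\<forall>e \<in> endpoints D. arc D e \<in> endpoints D \<and> arc D e \<noteq> e \<and> arc D (arc D e) = e
                        \<and> (is_out D e \<longleftrightarrow> \<not> is_out D (arc D e)))
     \<and> num_faces D = ncr D + 2 * num_components D"

definition n_plus :: "diagram \<Rightarrow> nat" where
  "n_plus D = card {i. i < ncr D \<and> pos D i}"

definition n_minus :: "diagram \<Rightarrow> nat" where
  "n_minus D = card {i. i < ncr D \<and> \<not> pos D i}"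

text \<open>States: lists u of length n with entries in {0,1}; u ! i is u_(i+1) of the paper.\<close>

definition state :: "diagram \<Rightarrow> nat list \<Rightarrow> bool" where
  "state D u \<longleftrightarrow> length u = ncr D \<and> set u \<subseteq> {0, 1}"

text \<open>Kauffman smoothing: the 0-smoothing (A-smoothing) joins endpoints 0-1 and 2-3,
the 1-smoothing (B-smoothing) joins 1-2 and 3-0.\<close>

definition partner :: "nat \<Rightarrow> nat \<Rightarrow> nat" where
  "partner b k =
     (if b = 0 then (if k = 0 then 1 else if k = 1 then 0 else if k = 2 then 3 else 2)
      else (if k = 1 then 2 else if k = 2 then 1 else if k = 3 then 0 else 3))"

type_synonym point = "(nat \<times> nat) + nat"

definition points :: "diagram \<Rightarrow> point set" where
  "points D = Inl ` endpoints D \<union> Inr ` {0..<nfree D}"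

definition smooth_rel :: "diagram \<Rightarrow> nat list \<Rightarrow> (point \<times> point) set" where
  "smooth_rel D u =
     {(Inl e, Inl (arc D e)) | e. e \<in> endpoints D} \<union>
     {(Inl (i, k), Inl (i, partner (u ! i) k)) | i k. i < ncr D \<and> k < 4}"

text \<open>Z(u): the circles of D(u), each represented as the set of its points.\<close>

definition circles :: "diagram \<Rightarrow> nat list \<Rightarrow> point set set" where
  "circles D u = points D // ((smooth_rel D u \<union> (smooth_rel D u)\<inverse>)\<^sup>*)"

definition circle_of :: "diagram \<Rightarrow> nat list \<Rightarrow> point \<Rightarrow> point set" where
  "circle_of D u p = ((smooth_rel D u \<union> (smooth_rel D u)\<inverse>)\<^sup>*) `` {p}"

text \<open>Surgery at c_i on D(u) with u_i = 1 is a merging iff the chord joins two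
different circles, i.e. the two smoothing arcs at c_i lie on different circles.\<close>

definition merging :: "diagram \<Rightarrow> nat list \<Rightarrow> nat \<Rightarrow> bool" where
  "merging D u i \<longleftrightarrow> circle_of D u (Inl (i, 0)) \<noteq> circle_of D u (Inl (i, 1))"

text \<open>Phi(u), computed along the chain from the all-one state to u which switches the
0-entries of u one at a time in increasing order of index.\<close>

definition chain_state :: "nat list \<Rightarrow> nat \<Rightarrow> nat list" where
  "chain_state u k = map (\<lambda>i. if i < k then u ! i else 1) [0..<length u]"

definition Phi :: "diagram \<Rightarrow> nat list \<Rightarrow> nat" where
  "Phi D u = card {k. k < length u \<and> u ! k = 0 \<and> merging D (chain_state u k) k}"

definition enhancement :: "diagram \<Rightarrow> nat list \<Rightarrow> (point set \<Rightarrow> int) \<Rightarrow> bool" where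
  "enhancement D u x \<longleftrightarrow> (\<forall>z \<in> circles D u. x z = 1 \<or> x z = -1)"

definition qdeg :: "diagram \<Rightarrow> nat list \<Rightarrow> (point set \<Rightarrow> int) \<Rightarrow> int" where
  "qdeg D u x = int (n_plus D) - 2 * int (n_minus D) + int (sum_list u)
      + int (card {z \<in> circles D u. x z = 1}) - int (card {z \<in> circles D u. x z = -1})"

definition jmax :: "diagram \<Rightarrow> int" where
  "jmax D = Max {qdeg D u x | u x. state D u \<and> enhancement D u x}"

end

theory Submission
  imports Defs
begin

abbreviation cl :: "('a \<times> 'a) set \<Rightarrow> ('a \<times> 'a) set" where "cl R \<equiv> (R \<union> R\<inverse>)\<^sup>*"

lemma cl_sym: "(x,y) \<in> cl R \<Longrightarrow> (y,x) \<in> cl R"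
proof -
  have e: "(R \<union> R\<inverse>)\<inverse> = R \<union> R\<inverse>" by auto
  assume "(x,y) \<in> cl R"
  hence "(y,x) \<in> ((R \<union> R\<inverse>)\<inverse>)\<^sup>*" by (simp add: rtrancl_converse)
  thus ?thesis using e by simp
qed

lemma cl_trans: "(x,y) \<in> cl R \<Longrightarrow> (y,z) \<in> cl R \<Longrightarrow> (x,z) \<in> cl R"
  by (rule rtrancl_trans)

lemma cl_base: "(x,y) \<in> R \<Longrightarrow> (x,y) \<in> cl R"
  by auto

lemma cl_base': "(y,x) \<in> R \<Longrightarrow> (x,y) \<in> cl R"
  by auto

lemma cl_refl: "(x,x) \<in> cl R" by simp

lemma cl_sub: assumes "R1 \<subseteq> cl R2" shows "cl R1 \<subseteq> cl R2"
proof -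
  have "R1 \<union> R1\<inverse> \<subseteq> cl R2" using assms cl_sym by fast
  thus ?thesis by (rule rtrancl_subset_rtrancl)
qed

lemma cl_mono: "R1 \<subseteq> R2 \<Longrightarrow> cl R1 \<subseteq> cl R2"
  by (rule rtrancl_mono) auto

lemma cl_insert:
  "(x,y) \<in> cl (insert (a,b) R) \<longleftrightarrow>
     (x,y) \<in> cl R \<or> ((x,a) \<in> cl R \<and> (b,y) \<in> cl R) \<or> ((x,b) \<in> cl R \<and> (a,y) \<in> cl R)"
proof
  assume "(x,y) \<in> cl (insert (a,b) R)"
  thus "(x,y) \<in> cl R \<or> ((x,a) \<in> cl R \<and> (b,y) \<in> cl R) \<or> ((x,b) \<in> cl R \<and> (a,y) \<in> cl R)"
  proof (induction rule: rtrancl_induct)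
    case base
    then show ?case by simp
  next
    case (step y z)
    have st: "(y,z) \<in> cl R \<or> (y,z) = (a,b) \<or> (y,z) = (b,a)" using step.hyps(2) by auto
    from step.IH st show ?case
      by (metis cl_trans cl_sym cl_refl prod.inject)
  qed
next
  have sub: "cl R \<subseteq> cl (insert (a,b) R)" by (rule cl_mono) auto
  have ab: "(a,b) \<in> cl (insert (a,b) R)" by auto
  assume "(x,y) \<in> cl R \<or> ((x,a) \<in> cl R \<and> (b,y) \<in> cl R) \<or> ((x,b) \<in> cl R \<and> (a,y) \<in> cl R)"
  thus "(x,y) \<in> cl (insert (a,b) R)"
    using sub ab by (meson cl_trans cl_sym subsetD)
qed

lemma cl_insert_inside: "(a,b) \<in> cl R \<Longrightarrow> cl (insert (a,b) R) = cl R"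
proof
  assume ab: "(a,b) \<in> cl R"
  show "cl (insert (a,b) R) \<subseteq> cl R"
  proof (rule cl_sub)
    show "insert (a,b) R \<subseteq> cl R" using ab by auto
  qed
  show "cl R \<subseteq> cl (insert (a,b) R)" by (rule cl_mono) auto
qed

lemma quotient_img: "X // r = (\<lambda>x. r``{x}) ` X"
  by (auto simp: quotient_def)

lemma ncl_insert:
  assumes fin: "finite X" and a: "a \<in> X" and b: "b \<in> X"
  shows "card (X // cl (insert (a,b) R)) + (if (a,b) \<in> cl R then 0 else 1) = card (X // cl R)"
proof (cases "(a,b) \<in> cl R")
  case True
  show ?thesis unfolding cl_insert_inside[OF True] using True by simp
next
  case False
  define A where "A = cl R `` {a}"
  define B where "B = cl R `` {b}"
  have cls: "cl (insert (a,b) R) `` {x} = (if x \<in> A \<union> B then A \<union> B else cl R `` {x})" for x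
  proof (cases "x \<in> A \<union> B")
    case True
    hence xab: "(a,x) \<in> cl R \<or> (b,x) \<in> cl R" unfolding A_def B_def by auto
    have "(x,y) \<in> cl (insert (a,b) R) \<longleftrightarrow> (a,y) \<in> cl R \<or> (b,y) \<in> cl R" for y
      unfolding cl_insert using xab by (meson cl_trans cl_sym)
    then show ?thesis using True unfolding A_def B_def by auto
  next
    case False
    hence xab: "(a,x) \<notin> cl R" "(b,x) \<notin> cl R" unfolding A_def B_def by auto
    have "(x,y) \<in> cl (insert (a,b) R) \<longleftrightarrow> (x,y) \<in> cl R" for y
      unfolding cl_insert using xab by (meson cl_sym)
    then show ?thesis using False by auto
  qed
  define Rest where "Rest = (\<lambda>x. cl R `` {x}) ` (X - (A \<union> B))"
  have clA: "x \<in> A \<Longrightarrow> cl R `` {x} = A" for x unfolding A_def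
    by (auto intro: cl_trans cl_sym)
  have clB: "x \<in> B \<Longrightarrow> cl R `` {x} = B" for x unfolding B_def
    by (auto intro: cl_trans cl_sym)
  have aA: "a \<in> A" and bB: "b \<in> B" unfolding A_def B_def by auto
  have q1: "X // cl R = insert A (insert B Rest)"
    unfolding quotient_img Rest_def using a b clA clB aA bB
    by (auto simp: image_iff)
  have q2: "X // cl (insert (a,b) R) = insert (A \<union> B) Rest"
    unfolding quotient_img Rest_def using a b cls aA bB
    by (auto simp: image_iff)
  have notin: "C \<in> Rest \<Longrightarrow> C \<inter> (A \<union> B) = {}" for C
  proof -
    assume "C \<in> Rest"
    then obtain x where x: "x \<notin> A \<union> B" "C = cl R `` {x}" unfolding Rest_def by auto
    show ?thesis
    proof (rule ccontr)
      assume "C \<inter> (A \<union> B) \<noteq> {}"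
      then obtain y where y: "y \<in> C" "y \<in> A \<union> B" by auto
      hence "(x,y) \<in> cl R" using x by auto
      hence "x \<in> A \<union> B" using y unfolding A_def B_def by (auto intro: cl_trans cl_sym)
      thus False using x by simp
    qed
  qed
  have AB: "A \<noteq> B" using False bB unfolding A_def by auto
  have "A \<notin> Rest" using notin aA by blast
  moreover have "B \<notin> Rest" using notin bB by blast
  moreover have "A \<union> B \<notin> Rest" using notin aA by blast
  moreover have "finite Rest" unfolding Rest_def using fin by simp
  ultimately show ?thesis using q1 q2 AB False by simp
qed

lemma ncl_insert_le:
  assumes "finite X" "a \<in> X" "b \<in> X"
  shows "card (X // cl R) \<le> card (X // cl (insert (a,b) R)) + 1"
    "card (X // cl (insert (a,b) R)) \<le> card (X // cl R)"
  using ncl_insert[OF assms, of R] by (auto split: if_splits)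

definition fedges :: "'a set \<Rightarrow> ('a \<Rightarrow> 'a) \<Rightarrow> ('a \<times> 'a) set" where
  "fedges X f = {(x, f x) | x. x \<in> X}"

definition sw :: "'a \<Rightarrow> 'a \<Rightarrow> 'a \<Rightarrow> 'a" where
  "sw a b x = (if x = a then b else if x = b then a else x)"

definition per :: "('a \<Rightarrow> 'a) \<Rightarrow> 'a \<Rightarrow> nat" where
  "per g x = (LEAST k. 0 < k \<and> (g^^k) x = x)"

lemma fedges_cong: "(\<And>x. x \<in> X \<Longrightarrow> f x = g x) \<Longrightarrow> fedges X f = fedges X g"
  unfolding fedges_def by force

lemma fedges_mem: "x \<in> X \<Longrightarrow> (x, f x) \<in> fedges X f"
  unfolding fedges_def by auto

lemma fedges_cl: "x \<in> X \<Longrightarrow> (x, f x) \<in> cl (fedges X f)"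
  using fedges_mem by fast

lemma fedges_cl': "x \<in> X \<Longrightarrow> (f x, x) \<in> cl (fedges X f)"
  using fedges_mem by fast

lemma funpow_in: "(\<And>x. x \<in> X \<Longrightarrow> f x \<in> X) \<Longrightarrow> x \<in> X \<Longrightarrow> (f^^m) x \<in> X"
  by (induction m) auto

lemma fedges_split:
  assumes a: "a \<in> X" and b: "b \<in> X"
  shows "fedges X f = insert (a, f a) (insert (b, f b) (fedges (X - {a,b}) f))"
  using a b unfolding fedges_def by auto

locale perm_on =
  fixes X :: "'a set" and f :: "'a \<Rightarrow> 'a"
  assumes fin: "finite X" and bij: "bij_betw f X X"
begin

lemma f_in: "x \<in> X \<Longrightarrow> f x \<in> X" using bij by (auto simp: bij_betw_def)
lemma f_inj: "x \<in> X \<Longrightarrow> y \<in> X \<Longrightarrow> f x = f y \<Longrightarrow> x = y"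
  using bij by (auto simp: bij_betw_def inj_on_def)
lemma fp_in: "x \<in> X \<Longrightarrow> (f^^m) x \<in> X" using funpow_in f_in by metis
lemma fp_inj: "x \<in> X \<Longrightarrow> y \<in> X \<Longrightarrow> (f^^m) x = (f^^m) y \<Longrightarrow> x = y"
proof (induction m)
  case 0 then show ?case by simp
next
  case (Suc m)
  have "(f^^m) x = (f^^m) y" using Suc.prems f_inj fp_in by simp
  then show ?case using Suc by blast
qed

lemma per_ex: assumes x: "x \<in> X" shows "\<exists>k>0. (f^^k) x = x"
proof -
  let ?g = "\<lambda>m. (f^^m) x"
  have sub: "?g ` {0..card X} \<subseteq> X" using fp_in x by auto
  have "\<not> inj_on ?g {0..card X}"
  proof
    assume "inj_on ?g {0..card X}"
    hence "card (?g ` {0..card X}) = card X + 1" by (simp add: card_image)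
    moreover have "card (?g ` {0..card X}) \<le> card X" using sub fin card_mono by blast
    ultimately show False by simp
  qed
  then obtain i j where ij: "i \<noteq> j" "?g i = ?g j" unfolding inj_on_def by blast
  obtain i j where ij2: "i < j" "?g i = ?g j"
    using ij by (metis linorder_neqE_nat)
  have "(f^^i) ((f^^(j-i)) x) = (f^^(i + (j - i))) x" by (simp add: funpow_add)
  also have "\<dots> = (f^^i) x" using ij2 by simp
  finally have "(f^^(j-i)) x = x" using fp_inj fp_in x by blast
  thus ?thesis using ij2 by (intro exI[of _ "j-i"]) simp
qed

lemma per: assumes "x \<in> X" shows "0 < per f x" "(f^^per f x) x = x"
proof -
  have "0 < per f x \<and> (f^^per f x) x = x"
    unfolding per_def by (rule LeastI_ex) (use per_ex[OF assms] in blast)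
  thus "0 < per f x" "(f^^per f x) x = x" by auto
qed

lemma per_min: assumes "x \<in> X" "0 < m" "m < per f x" shows "(f^^m) x \<noteq> x"
  using not_less_Least[of m "\<lambda>k. 0 < k \<and> (f^^k) x = x"] assms unfolding per_def by blast

lemma per_dist: assumes x: "x \<in> X" and "i < j" "j < per f x" shows "(f^^i) x \<noteq> (f^^j) x"
proof
  assume eq: "(f^^i) x = (f^^j) x"
  have "(f^^i) ((f^^(j-i)) x) = (f^^(i + (j - i))) x" by (simp add: funpow_add)
  also have "\<dots> = (f^^i) x" using eq assms by simp
  finally have "(f^^(j-i)) x = x" using fp_inj fp_in x by blast
  thus False using per_min[OF x, of "j-i"] assms by simp
qed

lemma reach_cl: "x \<in> X \<Longrightarrow> (x, (f^^m) x) \<in> cl (fedges X f)"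
proof (induction m)
  case 0 then show ?case by simp
next
  case (Suc m)
  have "((f^^m) x, f ((f^^m) x)) \<in> cl (fedges X f)" by (rule fedges_cl[OF fp_in[OF Suc.prems]])
  with Suc.IH[OF Suc.prems] have "(x, f ((f^^m) x)) \<in> cl (fedges X f)" by (rule cl_trans)
  then show ?case by simp
qed

lemma cl_reach: assumes "x \<in> X" "(x,y) \<in> cl (fedges X f)" shows "\<exists>m. (f^^m) x = y"
  using assms(2)
proof (induction rule: rtrancl_induct)
  case base
  then show ?case by (intro exI[of _ 0]) simp
next
  case (step y z)
  then obtain m where m: "(f^^m) x = y" by blast
  from step.hyps(2) show ?case
  proof
    assume "(y,z) \<in> fedges X f"
    hence "z = f y" unfolding fedges_def by auto
    thus ?thesis using m by (intro exI[of _ "Suc m"]) simp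
  next
    assume "(y,z) \<in> (fedges X f)\<inverse>"
    hence z: "z \<in> X" "y = f z" unfolding fedges_def by auto
    have "(f^^(per f z - 1)) (f z) = (f^^(per f z - 1 + 1)) z"
      by (simp only: funpow_add) simp
    also have "\<dots> = z" using per[OF z(1)] by simp
    finally have "(f^^(per f z - 1 + m)) x = z" using m z by (simp add: funpow_add)
    thus ?thesis by blast
  qed
qed

lemma walk:
  assumes x: "x \<in> X" and pq: "p \<le> q" and avoid: "\<And>m. p \<le> m \<Longrightarrow> m < q \<Longrightarrow> (f^^m) x \<notin> {a,b}"
  shows "((f^^p) x, (f^^q) x) \<in> cl (fedges (X - {a,b}) f)"
proof -
  have "n \<le> q \<Longrightarrow> p \<le> n \<Longrightarrow> ((f^^p) x, (f^^n) x) \<in> cl (fedges (X - {a,b}) f)" for n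
  proof (induction n)
    case 0 then show ?case by simp
  next
    case (Suc n)
    show ?case
    proof (cases "p = Suc n")
      case True then show ?thesis by simp
    next
      case False
      hence pn: "p \<le> n" "n < q" using Suc.prems by auto
      have "(f^^n) x \<in> X - {a,b}" using fp_in[OF x] avoid[OF pn] by auto
      hence "((f^^n) x, f ((f^^n) x)) \<in> cl (fedges (X - {a,b}) f)" by (rule fedges_cl)
      with Suc.IH[OF less_imp_le[OF pn(2)] pn(1)]
      have "((f^^p) x, f ((f^^n) x)) \<in> cl (fedges (X - {a,b}) f)" by (rule cl_trans)
      then show ?thesis by simp
    qed
  qed
  thus ?thesis using pq by simp
qed

lemma merge_path:
  assumes a: "a \<in> X" and nab: "(a,b) \<notin> cl (fedges X f)"
  shows "(f a, a) \<in> cl (fedges (X - {a,b}) f)"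
proof -
  have "((f^^1) a, (f^^per f a) a) \<in> cl (fedges (X - {a,b}) f)"
  proof (rule walk[OF a])
    show "1 \<le> per f a" using per[OF a] by simp
    fix m assume m: "1 \<le> m" "m < per f a"
    have "(f^^m) a \<noteq> a" using per_min[OF a] m by simp
    moreover have "(f^^m) a \<noteq> b"
    proof
      assume "(f^^m) a = b"
      with reach_cl[OF a, of m] have "(a,b) \<in> cl (fedges X f)" by simp
      with nab show False by (rule notE)
    qed
    ultimately show "(f^^m) a \<notin> {a,b}" by simp
  qed
  thus ?thesis using per[OF a] by simp
qed

lemma split_path:
  assumes a: "a \<in> X" and b: "b \<in> X" and ab: "a \<noteq> b" and cab: "(a,b) \<in> cl (fedges X f)"
  shows "(f a, b) \<in> cl (fedges (X - {a,b}) f)" "(f b, a) \<in> cl (fedges (X - {a,b}) f)"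
    "(a, b) \<notin> cl (fedges (X - {a,b}) f)"
proof -
  obtain m where m: "(f^^m) a = b" using cl_reach[OF a cab] by blast
  define j where "j = m mod per f a"
  have jb: "(f^^j) a = b" unfolding j_def using funpow_mod_eq[of "per f a" f a m] per(2)[OF a] m by simp
  have jp: "j < per f a" unfolding j_def using per[OF a] by simp
  have j0: "0 < j" using jb ab by (cases j) auto
  let ?E = "fedges (X - {a,b}) f"
  have "((f^^1) a, (f^^j) a) \<in> cl ?E"
  proof (rule walk[OF a])
    show "1 \<le> j" using j0 by simp
    fix k assume k: "1 \<le> k" "k < j"
    have "(f^^k) a \<noteq> a" using per_min[OF a] k jp by simp
    moreover have "(f^^k) a \<noteq> b" using per_dist[OF a, of k j] k jp jb by simp
    ultimately show "(f^^k) a \<notin> {a,b}" by simp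
  qed
  thus "(f a, b) \<in> cl ?E" using jb by simp
  have "((f^^Suc j) a, (f^^per f a) a) \<in> cl ?E"
  proof (rule walk[OF a])
    show "Suc j \<le> per f a" using jp by simp
    fix k assume k: "Suc j \<le> k" "k < per f a"
    have "(f^^k) a \<noteq> a" using per_min[OF a] k by simp
    moreover have "(f^^k) a \<noteq> b" using per_dist[OF a, of j k] k jb by simp
    ultimately show "(f^^k) a \<notin> {a,b}" by simp
  qed
  thus "(f b, a) \<in> cl ?E" using jb per[OF a] by simp
  define A where "A = {(f^^k) a | k. j < k \<and> k \<le> per f a}"
  have aA: "a \<in> A"
  proof -
    have "a = (f^^per f a) a \<and> j < per f a \<and> per f a \<le> per f a" using jp per[OF a] by simp
    thus ?thesis unfolding A_def by blast
  qed
  have bA: "b \<notin> A"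
  proof
    assume "b \<in> A"
    then obtain k where k: "j < k" "k \<le> per f a" "(f^^k) a = b" unfolding A_def by auto
    show False
    proof (cases "k = per f a")
      case True
      then show ?thesis using k per[OF a] jb per_min[OF a, of j] j0 jp by simp
    next
      case False
      then show ?thesis using per_dist[OF a, of j k] k jb by simp
    qed
  qed
  have closed: "z \<in> A" if yA: "y \<in> A" and yz: "(y,z) \<in> ?E \<union> ?E\<inverse>" for y z
  proof -
    obtain k where k: "j < k" "k \<le> per f a" "y = (f^^k) a" using yA unfolding A_def by auto
    from yz show ?thesis
    proof
      assume "(y,z) \<in> ?E"
      hence yz2: "y \<in> X - {a,b}" "z = f y" unfolding fedges_def by auto
      have "k \<noteq> per f a" using yz2 k per[OF a] by auto
      hence "k < per f a" using k by simp
      thus ?thesis unfolding A_def using k yz2 by (intro CollectI exI[of _ "Suc k"]) simp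
    next
      assume "(y,z) \<in> ?E\<inverse>"
      hence zy: "z \<in> X - {a,b}" "y = f z" unfolding fedges_def by auto
      obtain k' where k': "k = Suc k'" using k by (cases k) auto
      have fz: "f z = f ((f^^k') a)" using zy k k' by simp
      have zX: "z \<in> X" using zy by simp
      have zk: "z = (f^^k') a" by (rule f_inj[OF zX fp_in[OF a] fz])
      have "k' \<noteq> j" using zk zy jb by auto
      hence "j < k'" using k k' by simp
      thus ?thesis unfolding A_def using k k' zk by auto
    qed
  qed
  have reachA: "(a, z) \<in> cl ?E \<Longrightarrow> z \<in> A" for z
  proof (induction rule: rtrancl_induct)
    case base then show ?case by (rule aA)
  next
    case (step y z) show ?case by (rule closed[OF step.IH step.hyps(2)])
  qed
  show "(a, b) \<notin> cl ?E"
  proof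
    assume "(a, b) \<in> cl ?E"
    hence "b \<in> A" by (rule reachA)
    with bA show False by (rule notE)
  qed
qed

lemma transp:
  assumes a: "a \<in> X" and b: "b \<in> X" and ab: "a \<noteq> b"
    and g: "\<And>x. x \<in> X \<Longrightarrow> g x = f (sw a b x)"
  shows "(a,b) \<in> cl (fedges X f) \<Longrightarrow>
           card (X // cl (fedges X g)) = card (X // cl (fedges X f)) + 1 \<and> (a,b) \<notin> cl (fedges X g)"
    and "(a,b) \<notin> cl (fedges X f) \<Longrightarrow>
           card (X // cl (fedges X g)) + 1 = card (X // cl (fedges X f)) \<and> (a,b) \<in> cl (fedges X g)"
proof -
  let ?E = "fedges (X - {a,b}) f"
  have eg0: "fedges (X - {a,b}) g = ?E" by (rule fedges_cong) (auto simp: g sw_def)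
  have ef: "fedges X f = insert (a, f a) (insert (b, f b) ?E)" by (rule fedges_split[OF a b])
  have ga: "g a = f b" and gb: "g b = f a" using g[OF a] g[OF b] ab by (auto simp: sw_def)
  have eg: "fedges X g = insert (a, f b) (insert (b, f a) ?E)"
    using fedges_split[OF a b, of g] unfolding eg0 ga gb .
  {
    assume cab: "(a,b) \<in> cl (fedges X f)"
    note sp = split_path[OF a b ab cab]
    have c1: "cl (insert (b, f a) ?E) = cl ?E" by (rule cl_insert_inside) (rule cl_sym[OF sp(1)])
    have "(a, f b) \<in> cl ?E" by (rule cl_sym[OF sp(2)])
    hence "(a, f b) \<in> cl (insert (b, f a) ?E)" by (subst c1)
    hence "cl (insert (a, f b) (insert (b, f a) ?E)) = cl (insert (b, f a) ?E)" by (rule cl_insert_inside)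
    hence cg: "cl (fedges X g) = cl ?E" unfolding eg using c1 by (rule trans)
    have nbfb: "(b, f b) \<notin> cl ?E"
    proof
      assume "(b, f b) \<in> cl ?E"
      hence "(b, a) \<in> cl ?E" using sp(2) by (rule cl_trans)
      from cl_sym[OF this] sp(3) show False by (rule notE[rotated])
    qed
    have "(a, f a) \<in> cl (insert (b, f b) ?E)"
      unfolding cl_insert by (intro disjI2 conjI cl_sym[OF sp(2)] cl_sym[OF sp(1)])
    hence cf: "cl (fedges X f) = cl (insert (b, f b) ?E)" unfolding ef by (rule cl_insert_inside)
    have "card (X // cl (insert (b, f b) ?E)) + 1 = card (X // cl ?E)"
      using ncl_insert[OF fin b f_in[OF b], of ?E] nbfb by simp
    thus "card (X // cl (fedges X g)) = card (X // cl (fedges X f)) + 1 \<and> (a,b) \<notin> cl (fedges X g)"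
      unfolding cg cf using sp(3) by simp
  }
  {
    assume nab: "(a,b) \<notin> cl (fedges X f)"
    have nba: "(b,a) \<notin> cl (fedges X f)"
    proof
      assume "(b,a) \<in> cl (fedges X f)"
      from cl_sym[OF this] nab show False by (rule notE[rotated])
    qed
    have m1: "(f a, a) \<in> cl ?E" by (rule merge_path[OF a nab])
    have m2: "(f b, b) \<in> cl ?E" using merge_path[OF b nba] by (simp add: insert_commute)
    have c1: "cl (insert (b, f b) ?E) = cl ?E" by (rule cl_insert_inside) (rule cl_sym[OF m2])
    have "(a, f a) \<in> cl ?E" by (rule cl_sym[OF m1])
    hence "(a, f a) \<in> cl (insert (b, f b) ?E)" by (subst c1)
    hence "cl (insert (a, f a) (insert (b, f b) ?E)) = cl (insert (b, f b) ?E)" by (rule cl_insert_inside)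
    hence cf: "cl (fedges X f) = cl ?E" unfolding ef using c1 by (rule trans)
    have nab0: "(a,b) \<notin> cl ?E" using nab cf by simp
    have nb: "(b, f a) \<notin> cl ?E"
    proof
      assume "(b, f a) \<in> cl ?E"
      hence "(b, a) \<in> cl ?E" using m1 by (rule cl_trans)
      from cl_sym[OF this] nab0 show False by (rule notE[rotated])
    qed
    have "(a, f b) \<in> cl (insert (b, f a) ?E)"
      unfolding cl_insert by (intro disjI2 conjI cl_sym[OF m1] cl_sym[OF m2])
    hence cg: "cl (fedges X g) = cl (insert (b, f a) ?E)" unfolding eg by (rule cl_insert_inside)
    have "card (X // cl (insert (b, f a) ?E)) + 1 = card (X // cl ?E)"
      using ncl_insert[OF fin b f_in[OF a], of ?E] nb by simp
    moreover have "(a,b) \<in> cl (insert (b, f a) ?E)"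
      unfolding cl_insert by (intro disjI2 conjI cl_sym[OF m1] cl_refl)
    ultimately show "card (X // cl (fedges X g)) + 1 = card (X // cl (fedges X f)) \<and> (a,b) \<in> cl (fedges X g)"
      unfolding cg cf by simp
  }
qed

end

lemma invol_bij:
  assumes "\<And>x. x \<in> X \<Longrightarrow> g x \<in> X" "\<And>x. x \<in> X \<Longrightarrow> g (g x) = x"
  shows "bij_betw g X X"
proof -
  have "inj_on g X" by (rule inj_onI) (metis assms(2))
  moreover have "g ` X = X"
  proof
    show "g ` X \<subseteq> X" using assms(1) by auto
    show "X \<subseteq> g ` X"
    proof
      fix x assume x: "x \<in> X"
      hence "x = g (g x)" using assms(2) by simp
      thus "x \<in> g ` X" using assms(1)[OF x] by (rule image_eqI)
    qed
  qed
  ultimately show ?thesis by (simp add: bij_betw_def)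
qed

lemma sw_bij: assumes "a \<in> X" "b \<in> X" shows "bij_betw (sw a b) X X"
  by (rule invol_bij) (use assms in \<open>auto simp: sw_def\<close>)

lemma bij_sw:
  assumes s: "bij_betw s X X" and a: "a \<in> X" and b: "b \<in> X"
    and s': "\<And>x. x \<in> X \<Longrightarrow> s' x = s (sw a b x)"
  shows "bij_betw s' X X"
proof -
  have "bij_betw (s \<circ> sw a b) X X" by (rule bij_betw_trans[OF sw_bij[OF a b] s])
  thus ?thesis using bij_betw_cong[of X s' "s \<circ> sw a b" X] s' by simp
qed

lemma cl_class_eq: "(x,z) \<in> cl R \<Longrightarrow> cl R `` {x} = cl R `` {z}"
proof -
  assume xz: "(x,z) \<in> cl R"
  have zx: "(z,x) \<in> cl R" by (rule cl_sym[OF xz])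
  show ?thesis
  proof
    show "cl R `` {x} \<subseteq> cl R `` {z}"
    proof
      fix y assume "y \<in> cl R `` {x}"
      hence "(x,y) \<in> cl R" by simp
      with zx have "(z,y) \<in> cl R" by (rule cl_trans)
      thus "y \<in> cl R `` {z}" by simp
    qed
    show "cl R `` {z} \<subseteq> cl R `` {x}"
    proof
      fix y assume "y \<in> cl R `` {z}"
      hence "(z,y) \<in> cl R" by simp
      with xz have "(x,y) \<in> cl R" by (rule cl_trans)
      thus "y \<in> cl R `` {x}" by simp
    qed
  qed
qed

locale invol =
  fixes X :: "'a set" and al :: "'a \<Rightarrow> 'a"
  assumes fin: "finite X" and al_in: "\<And>x. x \<in> X \<Longrightarrow> al x \<in> X"
    and al_al: "\<And>x. x \<in> X \<Longrightarrow> al (al x) = x" and al_fp: "\<And>x. x \<in> X \<Longrightarrow> al x \<noteq> x"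
begin

definition Rel :: "('a \<Rightarrow> 'a) \<Rightarrow> ('a \<times> 'a) set" where "Rel s = fedges X s \<union> fedges X al"
definition Ob where "Ob s = card (X // cl (Rel s))"
definition Fc where "Fc s = card (X // cl (fedges X (s \<circ> al)))"
definition Vc where "Vc s = card (X // cl (fedges X s))"

lemma al_bij: "bij_betw al X X" by (rule invol_bij) (use al_in al_al in auto)

lemma comp_bij: "bij_betw s X X \<Longrightarrow> bij_betw (s \<circ> al) X X" by (rule bij_betw_trans[OF al_bij])

lemma al_cl: "x \<in> X \<Longrightarrow> (x, al x) \<in> cl (Rel s)"
  unfolding Rel_def by (rule cl_base) (auto simp: fedges_def)

lemma s_cl: "x \<in> X \<Longrightarrow> (x, s x) \<in> cl (Rel s)"
  unfolding Rel_def by (rule cl_base) (auto simp: fedges_def)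

lemma fedges_comp_sub: "fedges X (s \<circ> al) \<subseteq> cl (Rel s)"
proof
  fix p assume "p \<in> fedges X (s \<circ> al)"
  then obtain x where x: "x \<in> X" "p = (x, s (al x))" unfolding fedges_def by auto
  have "(x, al x) \<in> cl (Rel s)" by (rule al_cl[OF x(1)])
  moreover have "(al x, s (al x)) \<in> cl (Rel s)" by (rule s_cl[OF al_in[OF x(1)]])
  ultimately show "p \<in> cl (Rel s)" using x(2) by (metis cl_trans)
qed

lemma cl_comp_sub: "cl (fedges X (s \<circ> al)) \<subseteq> cl (Rel s)"
  by (rule cl_sub[OF fedges_comp_sub])

lemma step_S:
  assumes s: "bij_betw s X X" and a: "a \<in> X" and b: "b \<in> X" and ab: "a \<noteq> b"
    and cab: "(a,b) \<in> cl (fedges X s)"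
    and s': "\<And>x. x \<in> X \<Longrightarrow> s' x = s (sw a b x)"
  shows "Vc s' = Vc s + 1" "Ob s \<le> Ob s'" "Ob s' \<le> Ob s + 1"
    "(a,b) \<in> cl (Rel s') \<Longrightarrow> Ob s' = Ob s"
    "Fc s' = Fc s + 1 \<or> (Fc s' + 1 = Fc s \<and> Ob s' = Ob s)"
proof -
  interpret P: perm_on X s by unfold_locales (rule fin, rule s)
  show "Vc s' = Vc s + 1" unfolding Vc_def using P.transp(1)[OF a b ab s' cab] by simp
  let ?E = "fedges (X - {a,b}) s"
  let ?Q = "?E \<union> fedges X al"
  note sp = P.split_path[OF a b ab cab]
  have EQ: "cl ?E \<subseteq> cl ?Q" by (rule cl_mono) auto
  have sa': "s' a = s b" and sb': "s' b = s a" using s'[OF a] s'[OF b] ab by (auto simp: sw_def)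
  have E0': "fedges (X - {a,b}) s' = ?E" by (rule fedges_cong) (auto simp: s' sw_def)
  have R': "Rel s' = insert (a, s b) (insert (b, s a) ?Q)"
    unfolding Rel_def fedges_split[OF a b, of s'] E0' sa' sb' by simp
  have R: "Rel s = insert (a, s a) (insert (b, s b) ?Q)"
    unfolding Rel_def fedges_split[OF a b, of s] by simp
  have q1: "(b, s a) \<in> cl ?Q" using EQ cl_sym[OF sp(1)] by blast
  have q2: "(a, s b) \<in> cl ?Q" using EQ cl_sym[OF sp(2)] by blast
  have c1: "cl (insert (b, s a) ?Q) = cl ?Q" by (rule cl_insert_inside[OF q1])
  have "(a, s b) \<in> cl (insert (b, s a) ?Q)" unfolding c1 by (rule q2)
  hence "cl (insert (a, s b) (insert (b, s a) ?Q)) = cl (insert (b, s a) ?Q)" by (rule cl_insert_inside)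
  hence cR': "cl (Rel s') = cl ?Q" unfolding R' using c1 by (rule trans)
  have Ob': "Ob s' = card (X // cl ?Q)" unfolding Ob_def cR' ..
  have "(a, s a) \<in> cl (insert (b, s b) ?Q)"
    unfolding cl_insert by (intro disjI2 conjI q1 q2)
  hence "cl (insert (a, s a) (insert (b, s b) ?Q)) = cl (insert (b, s b) ?Q)" by (rule cl_insert_inside)
  hence cR: "cl (Rel s) = cl (insert (b, s b) ?Q)" unfolding R .
  have Ob: "Ob s + (if (b, s b) \<in> cl ?Q then 0 else 1) = Ob s'"
    unfolding Ob' unfolding Ob_def cR by (rule ncl_insert[OF fin b P.f_in[OF b]])
  show "Ob s \<le> Ob s'" "Ob s' \<le> Ob s + 1" using Ob by (auto split: if_splits)
  show ObEq: "Ob s' = Ob s" if h: "(a,b) \<in> cl (Rel s')"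
  proof -
    have "(b, a) \<in> cl ?Q" using cl_sym[OF h] unfolding cR' .
    hence "(b, s b) \<in> cl ?Q" using q2 by (rule cl_trans)
    thus ?thesis using Ob by simp
  qed
  interpret PF: perm_on X "s \<circ> al" by unfold_locales (rule fin, rule comp_bij[OF s])
  have aa: "al a \<in> X" "al b \<in> X" "al a \<noteq> al b" using al_in[OF a] al_in[OF b] al_al[OF a] al_al[OF b] ab
    by metis+
  have sw': "(s' \<circ> al) x = (s \<circ> al) (sw (al a) (al b) x)" if x: "x \<in> X" for x
  proof -
    have "al x \<in> X" by (rule al_in[OF x])
    show ?thesis
    proof (cases "x = al a")
      case True then show ?thesis using sa' al_al[OF a] al_al[OF b] by (simp add: sw_def)
    next
      case False note xa = False
      show ?thesis
      proof (cases "x = al b")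
        case True then show ?thesis using sb' al_al[OF a] al_al[OF b] aa by (simp add: sw_def)
      next
        case False
        have "al x \<noteq> a" using xa al_al[OF x] by auto
        moreover have "al x \<noteq> b" using False al_al[OF x] by auto
        ultimately show ?thesis using xa False s'[OF \<open>al x \<in> X\<close>] by (simp add: sw_def)
      qed
    qed
  qed
  show "Fc s' = Fc s + 1 \<or> (Fc s' + 1 = Fc s \<and> Ob s' = Ob s)"
  proof (cases "(al a, al b) \<in> cl (fedges X (s \<circ> al))")
    case True
    then show ?thesis using PF.transp(1)[where g="s' \<circ> al", OF aa sw'] unfolding Fc_def by simp
  next
    case False
    note tr = PF.transp(2)[where g="s' \<circ> al", OF aa sw' False]
    have "(al a, al b) \<in> cl (Rel s')" using tr cl_comp_sub by blast
    hence "(a, b) \<in> cl (Rel s')"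
      using al_cl[OF a, of s'] cl_sym[OF al_cl[OF b, of s']] by (metis cl_trans)
    then show ?thesis using tr ObEq unfolding Fc_def by simp
  qed
qed

lemma step_G:
  assumes s: "bij_betw s X X" and a: "a \<in> X" and b: "b \<in> X" and ab: "a \<noteq> b"
    and cab: "(a,b) \<in> cl (fedges X s)"
    and s': "\<And>x. x \<in> X \<Longrightarrow> s' x = s (sw a b x)"
  shows "2 * int (Ob s') - int (Vc s') - int (Fc s') \<le> 2 * int (Ob s) - int (Vc s) - int (Fc s)"
  using step_S[OF assms] by linarith

end

locale fullst = invol +
  fixes s :: "'a \<Rightarrow> 'a"
  assumes s_in: "\<And>x. x \<in> X \<Longrightarrow> s x \<in> X"
    and s_s: "\<And>x. x \<in> X \<Longrightarrow> s (s x) = x" and s_fp: "\<And>x. x \<in> X \<Longrightarrow> s x \<noteq> x"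
begin

definition pi where "pi = s \<circ> al"
definition pi' where "pi' = al \<circ> s"
lemma pi_ap: "pi x = s (al x)" by (simp add: pi_def)
lemma pi'_ap: "pi' x = al (s x)" by (simp add: pi'_def)

lemma s_bij: "bij_betw s X X" by (rule invol_bij) (use s_in s_s in auto)

sublocale PP: perm_on X pi unfolding pi_def by unfold_locales (rule fin, rule comp_bij[OF s_bij])


lemma A1: "x \<in> X \<Longrightarrow> (pi'^^r) ((pi^^r) x) = x"
proof (induction r arbitrary: x)
  case 0 then show ?case by simp
next
  case (Suc r)
  define y where "y = (pi^^r) x"
  have yX: "y \<in> X" unfolding y_def by (rule PP.fp_in[OF Suc.prems])
  have "(pi'^^Suc r) ((pi^^Suc r) x) = (pi'^^r) (pi' ((pi^^Suc r) x))"
    by (simp only: funpow_Suc_right o_apply)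
  also have "pi' ((pi^^Suc r) x) = pi' (pi y)" unfolding y_def by simp
  also have "\<dots> = y" using s_s[OF al_in[OF yX]] al_al[OF yX] by (simp add: pi_ap pi'_ap)
  finally show ?case using Suc.IH[OF Suc.prems] unfolding y_def by simp
qed

lemma A2: "x \<in> X \<Longrightarrow> s ((pi^^r) x) = (pi'^^r) (s x)"
proof (induction r)
  case 0 then show ?case by simp
next
  case (Suc r)
  define y where "y = (pi^^r) x"
  have yX: "y \<in> X" unfolding y_def by (rule PP.fp_in[OF Suc.prems])
  have "s ((pi^^Suc r) x) = s (pi y)" unfolding y_def by simp
  also have "\<dots> = al y" using s_s[OF al_in[OF yX]] by (simp add: pi_ap)
  also have "\<dots> = pi' (s y)" using s_s[OF yX] by (simp add: pi'_ap)
  also have "\<dots> = pi' ((pi'^^r) (s x))" using Suc.IH[OF Suc.prems] unfolding y_def by simp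
  also have "\<dots> = (pi'^^Suc r) (s x)" by simp
  finally show ?case .
qed

lemma EO1: assumes x: "x \<in> X" shows "(x, s x) \<notin> cl (fedges X pi)"
proof
  assume "(x, s x) \<in> cl (fedges X pi)"
  then obtain m where m: "(pi^^m) x = s x" using PP.cl_reach[OF x] by blast
  define r where "r = m div 2"
  define y where "y = (pi^^r) x"
  have yX: "y \<in> X" unfolding y_def by (rule PP.fp_in[OF x])
  show False
  proof (cases "even m")
    case True
    hence mr: "m = r + r" unfolding r_def by presburger
    have "(pi^^m) x = (pi^^r) y" unfolding mr y_def by (simp only: funpow_add o_apply)
    hence "s x = (pi^^r) y" using m by simp
    hence "(pi'^^r) (s x) = y" using A1[OF yX] by simp
    hence "s y = y" using A2[OF x] unfolding y_def by simp
    thus False using s_fp[OF yX] by simp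
  next
    case False
    hence mr: "m = r + Suc r" unfolding r_def by presburger
    have "(pi^^m) x = (pi^^r) ((pi^^Suc r) x)" unfolding mr by (simp only: funpow_add o_apply)
    also have "(pi^^Suc r) x = pi y" unfolding y_def by simp
    finally have "s x = (pi^^r) (pi y)" using m by simp
    hence "(pi'^^r) (s x) = pi y" using A1[OF PP.f_in[OF yX]] by simp
    hence "s y = s (al y)" using A2[OF x] unfolding y_def by (simp add: pi_ap)
    hence "s (s y) = s (s (al y))" by simp
    hence "y = al y" using s_s[OF yX] s_s[OF al_in[OF yX]] by simp
    thus False using al_fp[OF yX] by simp
  qed
qed

lemma edge_rev: "y \<in> X \<Longrightarrow> (s (pi y), s y) \<in> fedges X pi"
proof -
  assume y: "y \<in> X"
  have "s (pi y) \<in> X" using s_in PP.f_in y by blast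
  moreover have "pi (s (pi y)) = s y" using s_s[OF al_in[OF y]] al_al[OF y] by (simp add: pi_ap)
  ultimately show ?thesis unfolding fedges_def by force
qed

lemma EO_sym: "(x,y) \<in> cl (fedges X pi) \<Longrightarrow> (s x, s y) \<in> cl (fedges X pi)"
proof (induction rule: rtrancl_induct)
  case base then show ?case by simp
next
  case (step y z)
  from step.hyps(2) have "(s y, s z) \<in> cl (fedges X pi)"
  proof
    assume "(y,z) \<in> fedges X pi"
    hence "y \<in> X" "z = pi y" unfolding fedges_def by auto
    thus ?thesis using cl_base'[OF edge_rev[of y]] by simp
  next
    assume "(y,z) \<in> (fedges X pi)\<inverse>"
    hence "z \<in> X" "y = pi z" unfolding fedges_def by auto
    thus ?thesis using cl_base[OF edge_rev[of z]] by simp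
  qed
  with step.IH show ?case by (rule cl_trans)
qed

lemma EO2:
  assumes x: "x \<in> X" and xy: "(x,y) \<in> cl (Rel s)"
  shows "(x,y) \<in> cl (fedges X pi) \<or> (s x, y) \<in> cl (fedges X pi)"
  using xy
proof (induction rule: rtrancl_induct)
  case base then show ?case by simp
next
  case (step y z)
  let ?C = "cl (fedges X pi)"
  have yX: "y \<in> X" and zX: "z \<in> X" using step.hyps(2) s_in al_in unfolding Rel_def fedges_def by auto
  have ypi: "(y, pi y) \<in> ?C" by (rule fedges_cl[OF yX])
  have sw_case: "(x, s y) \<in> ?C \<or> (s x, s y) \<in> ?C"
  proof -
    from step.IH show ?thesis
    proof
      assume "(x,y) \<in> ?C" hence "(s x, s y) \<in> ?C" by (rule EO_sym)
      thus ?thesis by (rule disjI2)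
    next
      assume "(s x, y) \<in> ?C" hence "(s (s x), s y) \<in> ?C" by (rule EO_sym)
      thus ?thesis using s_s[OF x] by simp
    qed
  qed
  have al_case: "(x, al y) \<in> ?C \<or> (s x, al y) \<in> ?C"
  proof -
    have aly: "al y = s (pi y)" using s_s[OF al_in[OF yX]] by (simp add: pi_ap)
    from step.IH show ?thesis
    proof
      assume "(x,y) \<in> ?C" hence "(x, pi y) \<in> ?C" using ypi by (rule cl_trans)
      hence "(s x, s (pi y)) \<in> ?C" by (rule EO_sym)
      thus ?thesis using aly by simp
    next
      assume "(s x, y) \<in> ?C" hence "(s x, pi y) \<in> ?C" using ypi by (rule cl_trans)
      hence "(s (s x), s (pi y)) \<in> ?C" by (rule EO_sym)
      thus ?thesis using aly s_s[OF x] by simp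
    qed
  qed
  have "z = s y \<or> z = al y"
    using step.hyps(2) unfolding Rel_def fedges_def using s_s al_al by auto
  then show ?case using sw_case al_case by blast
qed

lemma EO3: "card (X // cl (fedges X pi)) = 2 * card (X // cl (Rel s))"
proof -
  let ?C = "cl (fedges X pi)" and ?R = "cl (Rel s)"
  let ?P = "X // ?C" and ?Q = "X // ?R"
  define fib where "fib D = {C \<in> ?P. C \<subseteq> D}" for D
  have CR: "?C \<subseteq> ?R" unfolding pi_def by (rule cl_comp_sub)
  have fibx: "fib (?R `` {x}) = {?C `` {x}, ?C `` {s x}}" if x: "x \<in> X" for x
  proof
    show "fib (?R `` {x}) \<subseteq> {?C `` {x}, ?C `` {s x}}"
    proof
      fix C assume "C \<in> fib (?R `` {x})"
      then obtain y where y: "y \<in> X" "C = ?C `` {y}" "C \<subseteq> ?R `` {x}"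
        unfolding fib_def quotient_def by auto
      have "y \<in> C" using y by simp
      hence "(x,y) \<in> ?R" using y by auto
      from EO2[OF x this] have "C = ?C `` {x} \<or> C = ?C `` {s x}"
      proof
        assume "(x,y) \<in> ?C" thus ?thesis using cl_class_eq[of x y] y(2) by simp
      next
        assume "(s x,y) \<in> ?C" thus ?thesis using cl_class_eq[of "s x" y] y(2) by simp
      qed
      thus "C \<in> {?C `` {x}, ?C `` {s x}}" by simp
    qed
    show "{?C `` {x}, ?C `` {s x}} \<subseteq> fib (?R `` {x})"
    proof -
      have "?C `` {x} \<in> ?P" using x unfolding quotient_def by auto
      moreover have "?C `` {x} \<subseteq> ?R `` {x}" using CR by auto
      moreover have "?C `` {s x} \<in> ?P" using s_in[OF x] unfolding quotient_def by auto
      moreover have "?R `` {s x} = ?R `` {x}"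
        using cl_class_eq[OF cl_sym[OF s_cl[OF x]]] .
      hence "?C `` {s x} \<subseteq> ?R `` {x}" using CR by auto
      ultimately show ?thesis unfolding fib_def by auto
    qed
  qed
  have card2: "card (fib D) = 2" if D: "D \<in> ?Q" for D
  proof -
    obtain x where x: "x \<in> X" "D = ?R `` {x}" using D unfolding quotient_def by auto
    have "?C `` {x} \<noteq> ?C `` {s x}"
    proof
      assume "?C `` {x} = ?C `` {s x}"
      hence "s x \<in> ?C `` {x}" by simp
      thus False using EO1[OF x(1)] by simp
    qed
    thus ?thesis using fibx[OF x(1)] x(2) by simp
  qed
  have union: "?P = \<Union> (fib ` ?Q)"
  proof
    show "?P \<subseteq> \<Union> (fib ` ?Q)"
    proof
      fix C assume C: "C \<in> ?P"
      then obtain y where y: "y \<in> X" "C = ?C `` {y}" unfolding quotient_def by auto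
      have "?R `` {y} \<in> ?Q" using y unfolding quotient_def by auto
      moreover have "C \<in> fib (?R `` {y})" unfolding fib_def using C y CR by auto
      ultimately show "C \<in> \<Union> (fib ` ?Q)" by blast
    qed
    show "\<Union> (fib ` ?Q) \<subseteq> ?P" unfolding fib_def by auto
  qed
  have disj: "fib D1 \<inter> fib D2 = {}" if D: "D1 \<in> ?Q" "D2 \<in> ?Q" "D1 \<noteq> D2" for D1 D2
  proof (rule ccontr)
    assume "fib D1 \<inter> fib D2 \<noteq> {}"
    then obtain C where C: "C \<in> ?P" "C \<subseteq> D1" "C \<subseteq> D2" unfolding fib_def by auto
    obtain y where y: "y \<in> X" "C = ?C `` {y}" using C unfolding quotient_def by auto
    have yC: "y \<in> C" using y by simp
    obtain x1 where x1: "D1 = ?R `` {x1}" using D(1) unfolding quotient_def by auto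
    obtain x2 where x2: "D2 = ?R `` {x2}" using D(2) unfolding quotient_def by auto
    have h1: "(x1, y) \<in> ?R" and h2: "(x2, y) \<in> ?R" using yC C x1 x2 by auto
    have "D1 = ?R `` {y}" unfolding x1 by (rule cl_class_eq[OF h1])
    moreover have "D2 = ?R `` {y}" unfolding x2 by (rule cl_class_eq[OF h2])
    ultimately have "D1 = D2" by simp
    thus False using D(3) by simp
  qed
  have finQ: "finite ?Q" using fin by (simp add: quotient_img)
  have fibfin: "finite (fib D)" if "D \<in> ?Q" for D using card2[OF that] card.infinite by fastforce
  have "card ?P = (\<Sum>D\<in>?Q. card (fib D))"
    unfolding union by (rule card_UN_disjoint[OF finQ]) (use fibfin disj in auto)
  also have "\<dots> = (\<Sum>D\<in>?Q. 2)" using card2 by simp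
  finally show ?thesis by simp
qed

end

definition sm :: "nat list \<Rightarrow> nat set \<Rightarrow> nat \<times> nat \<Rightarrow> nat \<times> nat" where
  "sm w S e = (if fst e \<in> S then (fst e, partner (w ! fst e) (snd e)) else rot e)"

lemma lt4: "k < (4::nat) \<Longrightarrow> k = 0 \<or> k = 1 \<or> k = 2 \<or> k = 3" by auto

lemma partner_lt: "partner b k < 4" unfolding partner_def by auto
lemma partner_inv: "k < 4 \<Longrightarrow> partner b (partner b k) = k"
  using lt4[of k] unfolding partner_def by auto
lemma partner_fp: "k < 4 \<Longrightarrow> partner b k \<noteq> k"
  using lt4[of k] unfolding partner_def by auto

lemma endpoints_mem: "e \<in> endpoints D \<longleftrightarrow> fst e < ncr D \<and> snd e < 4"
  unfolding endpoints_def by (cases e) auto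

lemma finite_endpoints: "finite (endpoints D)" unfolding endpoints_def by simp

lemma sm_fst: "fst (sm w S e) = fst e" unfolding sm_def rot_def by auto

lemma sm_in: "e \<in> endpoints D \<Longrightarrow> sm w S e \<in> endpoints D"
  unfolding endpoints_mem sm_def rot_def using partner_lt by auto

lemma rot_in: "e \<in> endpoints D \<Longrightarrow> rot e \<in> endpoints D"
  unfolding endpoints_mem rot_def by auto

lemma sm_inj: assumes x: "x \<in> endpoints D" and y: "y \<in> endpoints D" and eq: "sm w S x = sm w S y"
  shows "x = y"
proof -
  obtain i k where xi: "x = (i,k)" by (cases x)
  obtain j l where yj: "y = (j,l)" by (cases y)
  have ij: "i = j" using sm_fst[of w S x] sm_fst[of w S y] eq xi yj by simp
  have k4: "k < 4" and l4: "l < 4" using x y xi yj unfolding endpoints_mem by auto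
  show ?thesis
  proof (cases "i \<in> S")
    case True
    hence "partner (w ! i) k = partner (w ! i) l" using eq xi yj ij unfolding sm_def by simp
    hence "partner (w ! i) (partner (w ! i) k) = partner (w ! i) (partner (w ! i) l)" by simp
    hence "k = l" using partner_inv[OF k4] partner_inv[OF l4] by simp
    thus ?thesis using xi yj ij by simp
  next
    case False
    hence "(k + 1) mod 4 = (l + 1) mod 4" using eq xi yj ij unfolding sm_def rot_def by simp
    hence "k = l" using lt4[OF k4] lt4[OF l4] by auto
    thus ?thesis using xi yj ij by simp
  qed
qed

lemma sm_bij: "bij_betw (sm w S) (endpoints D) (endpoints D)"
proof -
  have inj: "inj_on (sm w S) (endpoints D)" by (rule inj_onI) (rule sm_inj)
  have "sm w S ` endpoints D \<subseteq> endpoints D" using sm_in by blast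
  hence "sm w S ` endpoints D = endpoints D"
    using endo_inj_surj[OF finite_endpoints _ inj] by blast
  thus ?thesis using inj by (simp add: bij_betw_def)
qed

lemma sm_empty: "sm w {} = rot" by (rule ext) (simp add: sm_def)

definition pp :: "nat list \<Rightarrow> nat \<Rightarrow> nat \<times> nat" where
  "pp w j = (if w ! j = 0 then (j,1) else (j,0))"
definition qq :: "nat list \<Rightarrow> nat \<Rightarrow> nat \<times> nat" where
  "qq w j = (if w ! j = 0 then (j,3) else (j,2))"

lemma pq_in: "j < ncr D \<Longrightarrow> pp w j \<in> endpoints D \<and> qq w j \<in> endpoints D"
  unfolding pp_def qq_def endpoints_mem by auto

lemma pq_ne: "pp w j \<noteq> qq w j" unfolding pp_def qq_def by auto

lemma sm_step:
  assumes jS: "j \<notin> S" and x: "x \<in> endpoints D" and wj: "w ! j \<in> {0,1}"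
  shows "sm w (insert j S) x = sm w S (sw (pp w j) (qq w j) x)"
proof -
  obtain i k where xi: "x = (i,k)" by (cases x)
  have k4: "k < 4" using x xi unfolding endpoints_mem by simp
  show ?thesis
  proof (cases "i = j")
    case False
    hence "sw (pp w j) (qq w j) x = x" unfolding sw_def pp_def qq_def xi by auto
    thus ?thesis using False xi unfolding sm_def by simp
  next
    case True
    show ?thesis
    proof (cases "w ! j = 0")
      case True
      then show ?thesis using \<open>i = j\<close> jS xi lt4[OF k4]
        unfolding sm_def sw_def pp_def qq_def rot_def partner_def by auto
    next
      case False
      hence "w ! j = 1" using wj by simp
      then show ?thesis using \<open>i = j\<close> jS xi lt4[OF k4]
        unfolding sm_def sw_def pp_def qq_def rot_def partner_def by auto
    qed
  qed
qed

lemma rot_edge_cl: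
  assumes jS: "j \<notin> S" and j: "j < ncr D" and k: "k < 3"
  shows "((j,k),(j,k+1)) \<in> cl (fedges (endpoints D) (sm w S))"
proof -
  have "(j,k) \<in> endpoints D" using j k unfolding endpoints_mem by simp
  hence "((j,k), sm w S (j,k)) \<in> cl (fedges (endpoints D) (sm w S))" by (rule fedges_cl)
  moreover have "sm w S (j,k) = (j, k+1)" using jS k unfolding sm_def rot_def by simp
  ultimately show ?thesis by simp
qed

lemma step_cl:
  assumes jS: "j \<notin> S" and j: "j < ncr D"
  shows "(pp w j, qq w j) \<in> cl (fedges (endpoints D) (sm w S))"
proof (cases "w ! j = 0")
  case True
  have "((j,1),(j,2)) \<in> cl (fedges (endpoints D) (sm w S))" using rot_edge_cl[OF jS j, of 1 w] by (simp add: numeral_2_eq_2 numeral_3_eq_3)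
  moreover have "((j,2),(j,3)) \<in> cl (fedges (endpoints D) (sm w S))" using rot_edge_cl[OF jS j, of 2 w] by (simp add: numeral_2_eq_2 numeral_3_eq_3)
  ultimately show ?thesis using True unfolding pp_def qq_def by (simp add: cl_trans)
next
  case False
  have "((j,0),(j,1)) \<in> cl (fedges (endpoints D) (sm w S))" using rot_edge_cl[OF jS j, of 0 w] by (simp add: numeral_2_eq_2 numeral_3_eq_3)
  moreover have "((j,1),(j,2)) \<in> cl (fedges (endpoints D) (sm w S))" using rot_edge_cl[OF jS j, of 1 w] by (simp add: numeral_2_eq_2 numeral_3_eq_3)
  ultimately show ?thesis using False unfolding pp_def qq_def by (simp add: cl_trans)
qed

lemma same_vertex:
  assumes i: "i < ncr D" and k: "k < 4" and l: "l < 4"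
  shows "((i,k),(i,l)) \<in> cl (fedges (endpoints D) rot)"
proof -
  have z: "((i,0),(i,m)) \<in> cl (fedges (endpoints D) rot)" if "m < 4" for m
    using that
  proof (induction m)
    case 0 then show ?case by simp
  next
    case (Suc m)
    have "((i,m),(i,m+1)) \<in> cl (fedges (endpoints D) (sm [] {}))"
      by (rule rot_edge_cl[OF _ i]) (use Suc.prems in auto)
    hence "((i,m),(i,Suc m)) \<in> cl (fedges (endpoints D) rot)" by (simp add: sm_empty)
    moreover have "((i,0),(i,m)) \<in> cl (fedges (endpoints D) rot)" using Suc by simp
    ultimately show ?case by (rule cl_trans[rotated])
  qed
  show ?thesis using cl_trans[OF cl_sym[OF z[OF k]] z[OF l]] .
qed

lemma cl_closed: assumes RX: "R \<subseteq> X \<times> X" and x: "x \<in> X" and xy: "(x,y) \<in> cl R" shows "y \<in> X"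
  using xy by (induction rule: rtrancl_induct) (use RX x in auto)

lemma fedges_sub: "(\<And>x. x \<in> X \<Longrightarrow> f x \<in> X) \<Longrightarrow> fedges X f \<subseteq> X \<times> X"
  unfolding fedges_def by auto

lemma card_quot_map:
  assumes img: "f ` X = Y" and RX: "R \<subseteq> X \<times> X" and TY: "T \<subseteq> Y \<times> Y"
    and iff: "\<And>x y. x \<in> X \<Longrightarrow> y \<in> X \<Longrightarrow> (x,y) \<in> cl R \<longleftrightarrow> (f x, f y) \<in> cl T"
  shows "card (X // cl R) = card (Y // cl T)"
proof -
  have cls: "f ` (cl R `` {x}) = cl T `` {f x}" if x: "x \<in> X" for x
  proof
    show "f ` (cl R `` {x}) \<subseteq> cl T `` {f x}"
    proof
      fix v assume "v \<in> f ` (cl R `` {x})"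
      then obtain y where y: "(x,y) \<in> cl R" "v = f y" by auto
      have "y \<in> X" by (rule cl_closed[OF RX x y(1)])
      thus "v \<in> cl T `` {f x}" using iff[OF x] y by auto
    qed
    show "cl T `` {f x} \<subseteq> f ` (cl R `` {x})"
    proof
      fix v assume "v \<in> cl T `` {f x}"
      hence v: "(f x, v) \<in> cl T" by simp
      have "f x \<in> Y" using img x by auto
      hence "v \<in> Y" by (rule cl_closed[OF TY _ v])
      then obtain y where y: "y \<in> X" "v = f y" using img by auto
      hence "(x,y) \<in> cl R" using iff[OF x y(1)] v by simp
      thus "v \<in> f ` (cl R `` {x})" using y by auto
    qed
  qed
  have inj: "inj_on (\<lambda>C. f ` C) (X // cl R)"
  proof (rule inj_onI)
    fix C1 C2 assume C1: "C1 \<in> X // cl R" and C2: "C2 \<in> X // cl R" and eq: "f ` C1 = f ` C2"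
    obtain x1 where x1: "x1 \<in> X" "C1 = cl R `` {x1}" using C1 unfolding quotient_def by auto
    obtain x2 where x2: "x2 \<in> X" "C2 = cl R `` {x2}" using C2 unfolding quotient_def by auto
    have "cl T `` {f x1} = cl T `` {f x2}" using eq cls x1 x2 by simp
    hence "f x2 \<in> cl T `` {f x1}" by simp
    hence "(x1, x2) \<in> cl R" using iff[OF x1(1) x2(1)] by simp
    thus "C1 = C2" unfolding x1(2) x2(2) by (rule cl_class_eq)
  qed
  have "(\<lambda>C. f ` C) ` (X // cl R) = Y // cl T"
  proof -
    have "(\<lambda>C. f ` C) ` (X // cl R) = (\<lambda>x. cl T `` {f x}) ` X"
      unfolding quotient_img image_image using cls by (rule image_cong[OF refl])
    also have "\<dots> = (\<lambda>u. cl T `` {u}) ` (f ` X)" by (simp add: image_image)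
    also have "\<dots> = Y // cl T" unfolding img quotient_img ..
    finally show ?thesis .
  qed
  thus ?thesis using card_image[OF inj] by simp
qed

locale diag =
  fixes D :: diagram
  assumes dg: "diagram D"
begin

lemma arc_in: "e \<in> endpoints D \<Longrightarrow> arc D e \<in> endpoints D" using dg unfolding diagram_def by blast
lemma arc_arc: "e \<in> endpoints D \<Longrightarrow> arc D (arc D e) = e" using dg unfolding diagram_def by blast
lemma arc_fp: "e \<in> endpoints D \<Longrightarrow> arc D e \<noteq> e" using dg unfolding diagram_def by blast
lemma euler: "num_faces D = ncr D + 2 * num_components D" using dg unfolding diagram_def by blast

sublocale invol "endpoints D" "arc D"
  by unfold_locales (auto simp: finite_endpoints arc_in arc_arc arc_fp)

lemma Vc_rot: "Vc rot = ncr D"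
proof -
  have "card (endpoints D // cl (fedges (endpoints D) rot)) = card ({0..<ncr D} // cl {})"
  proof (rule card_quot_map[where f = fst])
    show "fst ` endpoints D = {0..<ncr D}"
    proof
      show "fst ` endpoints D \<subseteq> {0..<ncr D}" unfolding endpoints_def by auto
      show "{0..<ncr D} \<subseteq> fst ` endpoints D"
      proof
        fix i assume "i \<in> {0..<ncr D}"
        hence "(i,0) \<in> endpoints D" unfolding endpoints_mem by simp
        thus "i \<in> fst ` endpoints D" by (rule rev_image_eqI) simp
      qed
    qed
    show "fedges (endpoints D) rot \<subseteq> endpoints D \<times> endpoints D" by (rule fedges_sub) (rule rot_in)
    show "{} \<subseteq> {0..<ncr D} \<times> {0..<ncr D}" by simp
    fix x y assume x: "x \<in> endpoints D" and y: "y \<in> endpoints D"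
    show "(x,y) \<in> cl (fedges (endpoints D) rot) \<longleftrightarrow> (fst x, fst y) \<in> cl {}"
    proof
      assume "(x,y) \<in> cl (fedges (endpoints D) rot)"
      hence "fst x = fst y"
        by (induction rule: rtrancl_induct) (auto simp: fedges_def rot_def)
      thus "(fst x, fst y) \<in> cl {}" by simp
    next
      assume "(fst x, fst y) \<in> cl {}"
      hence "fst x = fst y" by simp
      moreover obtain i k where "x = (i,k)" by (cases x)
      moreover obtain j l where "y = (j,l)" by (cases y)
      ultimately show "(x,y) \<in> cl (fedges (endpoints D) rot)"
        using same_vertex x y unfolding endpoints_mem by auto
    qed
  qed
  also have "\<dots> = ncr D"
  proof -
    have "{0..<ncr D} // cl {} = (\<lambda>i. {i}) ` {0..<ncr D}" unfolding quotient_img by simp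
    thus ?thesis by (simp add: card_image)
  qed
  finally show ?thesis unfolding Vc_def .
qed

lemma CA_sub: "crossing_adj D \<subseteq> {0..<ncr D} \<times> {0..<ncr D}"
proof
  fix p assume "p \<in> crossing_adj D"
  then obtain i j k where p: "p = (i,j)" "k < 4" "i < ncr D" "fst (arc D (i,k)) = j"
    unfolding crossing_adj_def by auto
  have "(i,k) \<in> endpoints D" using p unfolding endpoints_mem by simp
  hence "arc D (i,k) \<in> endpoints D" by (rule arc_in)
  thus "p \<in> {0..<ncr D} \<times> {0..<ncr D}" using p unfolding endpoints_mem by auto
qed

lemma Ob_rot: "Ob rot = num_components D"
proof -
  let ?X = "endpoints D"
  have sv: "(x,y) \<in> cl (Rel rot)" if "x \<in> ?X" "y \<in> ?X" "fst x = fst y" for x y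
  proof -
    obtain i k where xi: "x = (i,k)" by (cases x)
    obtain j l where yj: "y = (j,l)" by (cases y)
    have "(x,y) \<in> cl (fedges ?X rot)" using same_vertex that xi yj unfolding endpoints_mem by auto
    moreover have "cl (fedges ?X rot) \<subseteq> cl (Rel rot)" unfolding Rel_def by (rule cl_mono) auto
    ultimately show ?thesis by (rule subsetD[rotated])
  qed
  have "card (?X // cl (Rel rot)) = card ({0..<ncr D} // cl (crossing_adj D))"
  proof (rule card_quot_map[where f = fst])
    show "fst ` ?X = {0..<ncr D}"
    proof
      show "fst ` ?X \<subseteq> {0..<ncr D}" unfolding endpoints_def by auto
      show "{0..<ncr D} \<subseteq> fst ` ?X"
      proof
        fix i assume "i \<in> {0..<ncr D}"
        hence "(i,0) \<in> ?X" unfolding endpoints_mem by simp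
        thus "i \<in> fst ` ?X" by (rule rev_image_eqI) simp
      qed
    qed
    show "Rel rot \<subseteq> ?X \<times> ?X" unfolding Rel_def using fedges_sub[of ?X rot] fedges_sub[of ?X "arc D"]
      rot_in arc_in by blast
    show "crossing_adj D \<subseteq> {0..<ncr D} \<times> {0..<ncr D}" by (rule CA_sub)
    fix x y assume x: "x \<in> ?X" and y: "y \<in> ?X"
    show "(x,y) \<in> cl (Rel rot) \<longleftrightarrow> (fst x, fst y) \<in> cl (crossing_adj D)"
    proof
      assume "(x,y) \<in> cl (Rel rot)"
      thus "(fst x, fst y) \<in> cl (crossing_adj D)"
      proof (induction rule: rtrancl_induct)
        case base then show ?case by simp
      next
        case (step y z)
        have e: "(fst y, fst z) \<in> cl (crossing_adj D)"
        proof -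
          have ed: "fst q = fst p \<or> (fst p, fst q) \<in> crossing_adj D" if "(p,q) \<in> Rel rot" for p q
          proof -
            from that have "p \<in> ?X \<and> (q = rot p \<or> q = arc D p)" unfolding Rel_def fedges_def by auto
            moreover have "p \<in> ?X \<Longrightarrow> q = arc D p \<Longrightarrow> (fst p, fst q) \<in> crossing_adj D"
              unfolding crossing_adj_def endpoints_mem by (cases p) auto
            ultimately show ?thesis unfolding rot_def by auto
          qed
          from step.hyps(2) show ?thesis
          proof
            assume "(y,z) \<in> Rel rot" thus ?thesis using ed[of y z] by auto
          next
            assume "(y,z) \<in> (Rel rot)\<inverse>" thus ?thesis using ed[of z y] by auto
          qed
        qed
        with step.IH show ?case by (rule cl_trans)
      qed
    next
      assume "(fst x, fst y) \<in> cl (crossing_adj D)"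
      hence "\<forall>y'. y' \<in> ?X \<longrightarrow> fst y' = fst y \<longrightarrow> (x,y') \<in> cl (Rel rot)"
      proof (induction rule: rtrancl_induct)
        case base then show ?case by (intro allI impI, rule sv[OF x]) auto
      next
        case (step u v)
        show ?case
        proof (intro allI impI)
          fix y' assume y': "y' \<in> ?X" "fst y' = v"
          from step.hyps(2) show "(x,y') \<in> cl (Rel rot)"
          proof
            assume "(u,v) \<in> crossing_adj D"
            then obtain k where k: "k < 4" "u < ncr D" "fst (arc D (u,k)) = v"
              unfolding crossing_adj_def by auto
            have uk: "(u,k) \<in> ?X" using k unfolding endpoints_mem by simp
            have h1: "(x,(u,k)) \<in> cl (Rel rot)" using step.IH uk by simp
            have h2: "((u,k), arc D (u,k)) \<in> cl (Rel rot)" by (rule al_cl[OF uk])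
            have h3: "(arc D (u,k), y') \<in> cl (Rel rot)" using sv arc_in[OF uk] y' k by simp
            show ?thesis by (rule cl_trans[OF cl_trans[OF h1 h2] h3])
          next
            assume "(u,v) \<in> (crossing_adj D)\<inverse>"
            then obtain k where k: "k < 4" "v < ncr D" "fst (arc D (v,k)) = u"
              unfolding crossing_adj_def by auto
            have vk: "(v,k) \<in> ?X" using k unfolding endpoints_mem by simp
            have e: "arc D (v,k) \<in> ?X" by (rule arc_in[OF vk])
            have h1: "(x, arc D (v,k)) \<in> cl (Rel rot)" using step.IH e k(3) by (cases "arc D (v,k)") auto
            have h2: "(arc D (v,k), arc D (arc D (v,k))) \<in> cl (Rel rot)" by (rule al_cl[OF e])
            have h3: "(arc D (arc D (v,k)), y') \<in> cl (Rel rot)" using sv vk y' arc_arc[OF vk] by simp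
            show ?thesis by (rule cl_trans[OF cl_trans[OF h1 h2] h3])
          qed
        qed
      qed
      from this[rule_format, OF y refl] show "(x,y) \<in> cl (Rel rot)" .
    qed
  qed
  thus ?thesis unfolding Ob_def num_components_def .
qed

lemma Fc_rot: "Fc rot = num_faces D"
proof -
  let ?X = "endpoints D"
  interpret R: perm_on ?X "rot \<circ> arc D"
    by unfold_locales (rule finite_endpoints, rule comp_bij, use sm_bij[of _ "{}"] in \<open>simp add: sm_empty\<close>)
  have fp: "face_perm D = rot \<circ> arc D" by (rule ext) (simp add: face_perm_def)
  have "?X // {(e, f). \<exists>m. (face_perm D ^^ m) e = f} = ?X // cl (fedges ?X (rot \<circ> arc D))"
    unfolding quotient_img
  proof (rule image_cong[OF refl])
    fix x assume x: "x \<in> ?X"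
    show "{(e, f). \<exists>m. (face_perm D ^^ m) e = f} `` {x} = cl (fedges ?X (rot \<circ> arc D)) `` {x}"
    proof (rule set_eqI)
      fix y
      have "y \<in> {(e, f). \<exists>m. (face_perm D ^^ m) e = f} `` {x} \<longleftrightarrow> (\<exists>m. ((rot \<circ> arc D)^^m) x = y)"
        unfolding fp by simp
      also have "\<dots> \<longleftrightarrow> (x,y) \<in> cl (fedges ?X (rot \<circ> arc D))"
        using R.reach_cl[OF x] R.cl_reach[OF x] by metis
      finally show "y \<in> {(e, f). \<exists>m. (face_perm D ^^ m) e = f} `` {x} \<longleftrightarrow> y \<in> cl (fedges ?X (rot \<circ> arc D)) `` {x}"
        by simp
    qed
  qed
  thus ?thesis unfolding Fc_def num_faces_def by simp
qed

lemma G_rot: "2 * int (Ob rot) - int (Vc rot) - int (Fc rot) = - 2 * int (ncr D)"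
  using Vc_rot Ob_rot Fc_rot euler by simp

end

lemma cl_img_a:
  assumes g: "inj g" and h: "(p, q) \<in> cl (map_prod g g ` R)"
  shows "(\<forall>x. p = g x \<longrightarrow> (\<exists>y. q = g y \<and> (x,y) \<in> cl R)) \<and> (p \<notin> range g \<longrightarrow> q = p)"
  using h
proof (induction rule: rtrancl_induct)
  case base then show ?case by auto
next
  case (step y z)
  from step.hyps(2) obtain a b where ab: "(a,b) \<in> R \<union> R\<inverse>" "(y = g a \<and> z = g b)"
    by auto
  show ?case
  proof (intro conjI allI impI)
    fix x assume px: "p = g x"
    then obtain y' where y': "y = g y'" "(x,y') \<in> cl R" using step.IH by blast
    have "y' = a" using y' ab g by (auto dest: injD)
    hence "(x, a) \<in> cl R" using y' by simp
    from this ab(1) have "(x, b) \<in> cl R" by (rule rtrancl_into_rtrancl)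
    thus "\<exists>y. z = g y \<and> (x,y) \<in> cl R" using ab by blast
  next
    assume "p \<notin> range g"
    hence "y = p" using step.IH by blast
    thus "z = p" using ab \<open>p \<notin> range g\<close> by auto
  qed
qed

lemma cl_img_b:
  assumes "(x, y) \<in> cl R"
  shows "(g x, g y) \<in> cl (map_prod g g ` R)"
  using assms
proof (induction rule: rtrancl_induct)
  case base then show ?case by simp
next
  case (step y z)
  have "(g y, g z) \<in> (map_prod g g ` R) \<union> (map_prod g g ` R)\<inverse>" using step.hyps(2) by force
  with step.IH show ?case by (rule rtrancl_into_rtrancl)
qed

lemma cl_img_class:
  assumes g: "inj g"
  shows "cl (map_prod g g ` R) `` {g x} = g ` (cl R `` {x})"
proof
  show "cl (map_prod g g ` R) `` {g x} \<subseteq> g ` (cl R `` {x})"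
  proof
    fix q assume "q \<in> cl (map_prod g g ` R) `` {g x}"
    hence "(g x, q) \<in> cl (map_prod g g ` R)" by simp
    from cl_img_a[OF g this] obtain y where "q = g y" "(x,y) \<in> cl R" by blast
    thus "q \<in> g ` (cl R `` {x})" by simp
  qed
  show "g ` (cl R `` {x}) \<subseteq> cl (map_prod g g ` R) `` {g x}"
  proof
    fix q assume "q \<in> g ` (cl R `` {x})"
    then obtain y where y: "q = g y" "(x,y) \<in> cl R" by auto
    have "(g x, g y) \<in> cl (map_prod g g ` R)" by (rule cl_img_b[OF y(2)])
    thus "q \<in> cl (map_prod g g ` R) `` {g x}" using y(1) by simp
  qed
qed

lemma cl_img_class2:
  assumes g: "inj g" and p: "p \<notin> range g"
  shows "cl (map_prod g g ` R) `` {p} = {p}"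
proof
  show "cl (map_prod g g ` R) `` {p} \<subseteq> {p}"
  proof
    fix q assume "q \<in> cl (map_prod g g ` R) `` {p}"
    hence "(p, q) \<in> cl (map_prod g g ` R)" by simp
    from cl_img_a[OF g this] p show "q \<in> {p}" by simp
  qed
  show "{p} \<subseteq> cl (map_prod g g ` R) `` {p}" by simp
qed

context diag
begin

abbreviation smf :: "nat list \<Rightarrow> nat \<times> nat \<Rightarrow> nat \<times> nat" where
  "smf w \<equiv> sm w {0..<ncr D}"

lemma state_len: "state D w \<Longrightarrow> length w = ncr D" unfolding state_def by simp
lemma state_val: assumes st: "state D w" and j: "j < ncr D" shows "w ! j \<in> {0,1}"
proof -
  have "w ! j \<in> set w" by (rule nth_mem) (use st j in \<open>simp add: state_def\<close>)
  thus ?thesis using st unfolding state_def by blast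
qed

lemma chain:
  assumes st: "state D w" and S: "S \<subseteq> {0..<ncr D}"
  shows "Vc (sm w S) = ncr D + card S \<and>
    2 * int (Ob (sm w S)) - int (Vc (sm w S)) - int (Fc (sm w S)) \<le> - 2 * int (ncr D)"
proof -
  have fin: "finite S" using S finite_subset by blast
  show ?thesis using fin S
  proof (induction S rule: finite_induct)
    case empty
    then show ?case using Vc_rot G_rot by (simp add: sm_empty)
  next
    case (insert j S)
    have j: "j < ncr D" and S': "S \<subseteq> {0..<ncr D}" using insert.prems by auto
    note IH = insert.IH[OF S']
    have wj: "w ! j \<in> {0,1}" by (rule state_val[OF st j])
    have s': "\<And>x. x \<in> endpoints D \<Longrightarrow> sm w (insert j S) x = sm w S (sw (pp w j) (qq w j) x)"
      by (rule sm_step[OF insert.hyps(2) _ wj])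
    note pq = pq_in[OF j, of w]
    have st1: "Vc (sm w (insert j S)) = Vc (sm w S) + 1"
      by (rule step_S(1)[OF sm_bij pq[THEN conjunct1] pq[THEN conjunct2] pq_ne step_cl[OF insert.hyps(2) j] s'])
    have st2: "2 * int (Ob (sm w (insert j S))) - int (Vc (sm w (insert j S))) - int (Fc (sm w (insert j S)))
       \<le> 2 * int (Ob (sm w S)) - int (Vc (sm w S)) - int (Fc (sm w S))"
      by (rule step_G[OF sm_bij pq[THEN conjunct1] pq[THEN conjunct2] pq_ne step_cl[OF insert.hyps(2) j] s'])
    show ?case using IH st1 st2 insert.hyps by simp
  qed
qed

lemma invol_D: "invol (endpoints D) (arc D)"
  by unfold_locales (auto simp: finite_endpoints arc_in arc_arc arc_fp)

lemma fullst_smf: "fullst (endpoints D) (arc D) (smf w)"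
proof -
  have "fullst_axioms (endpoints D) (smf w)"
  proof
    fix x assume x: "x \<in> endpoints D"
    obtain i k where xi: "x = (i,k)" by (cases x)
    have ik: "i < ncr D" "k < 4" using x xi unfolding endpoints_mem by auto
    show "smf w x \<in> endpoints D" by (rule sm_in[OF x])
    show "smf w (smf w x) = x" using ik xi partner_inv[OF ik(2)] unfolding sm_def by simp
    show "smf w x \<noteq> x" using ik xi partner_fp[OF ik(2)] unfolding sm_def by simp
  qed
  thus ?thesis unfolding fullst_def using invol_D by simp
qed

lemma Fc_full: "Fc (smf w) = 2 * Ob (smf w)"
proof -
  interpret W: fullst "endpoints D" "arc D" "smf w" by (rule fullst_smf)
  show ?thesis using W.EO3 unfolding Fc_def Ob_def W.pi_def by simp
qed

lemma smooth_rel_img: "smooth_rel D w = map_prod (Inl :: nat \<times> nat \<Rightarrow> point) (Inl :: nat \<times> nat \<Rightarrow> point) ` Rel (smf w)"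
proof
  show "smooth_rel D w \<subseteq> map_prod (Inl :: nat \<times> nat \<Rightarrow> point) (Inl :: nat \<times> nat \<Rightarrow> point) ` Rel (smf w)"
  proof
    fix p assume "p \<in> smooth_rel D w"
    then consider (a) e where "e \<in> endpoints D" "p = (Inl e, Inl (arc D e))"
      | (b) i k where "i < ncr D" "k < 4" "p = (Inl (i,k), Inl (i, partner (w ! i) k))"
      unfolding smooth_rel_def by blast
    then show "p \<in> map_prod (Inl :: nat \<times> nat \<Rightarrow> point) (Inl :: nat \<times> nat \<Rightarrow> point) ` Rel (smf w)"
    proof cases
      case a
      hence "(e, arc D e) \<in> Rel (smf w)" unfolding Rel_def fedges_def by blast
      thus ?thesis using a by force
    next
      case b
      hence "(i,k) \<in> endpoints D" unfolding endpoints_mem by simp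
      hence "((i,k), smf w (i,k)) \<in> Rel (smf w)" unfolding Rel_def fedges_def by blast
      moreover have "smf w (i,k) = (i, partner (w ! i) k)" using b unfolding sm_def by simp
      ultimately show ?thesis using b by force
    qed
  qed
  show "map_prod (Inl :: nat \<times> nat \<Rightarrow> point) (Inl :: nat \<times> nat \<Rightarrow> point) ` Rel (smf w) \<subseteq> smooth_rel D w"
  proof
    fix p assume "p \<in> map_prod (Inl :: nat \<times> nat \<Rightarrow> point) (Inl :: nat \<times> nat \<Rightarrow> point) ` Rel (smf w)"
    then obtain e f where ef: "(e,f) \<in> Rel (smf w)" "p = (Inl e, Inl f)" by auto
    hence "e \<in> endpoints D \<and> (f = smf w e \<or> f = arc D e)" unfolding Rel_def fedges_def by auto
    moreover obtain i k where "e = (i,k)" by (cases e)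
    ultimately show "p \<in> smooth_rel D w" using ef unfolding smooth_rel_def endpoints_mem sm_def by auto
  qed
qed

lemma circles_card: "card (circles D w) = Ob (smf w) + nfree D"
proof -
  let ?X = "endpoints D" and ?R = "cl (Rel (smf w))"
  let ?S = "cl (smooth_rel D w)"
  have inj: "inj (Inl :: nat \<times> nat \<Rightarrow> point)" by (auto intro: injI)
  have c1: "?S `` {Inl x} = Inl ` (?R `` {x})" for x
    unfolding smooth_rel_img by (rule cl_img_class[OF inj])
  have c2: "?S `` {Inr j} = {Inr j}" for j
    unfolding smooth_rel_img by (rule cl_img_class2[OF inj]) auto
  have "circles D w = (\<lambda>C. Inl ` C) ` (?X // ?R) \<union> (\<lambda>j. {Inr j}) ` {0..<nfree D}"
    unfolding circles_def points_def quotient_img image_Un image_image c1 c2 by simp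
  moreover have "card ((\<lambda>C. Inl ` C) ` (?X // ?R)) = card (?X // ?R)"
    by (rule card_image) (auto intro: inj_onI simp: inj_image_eq_iff[OF inj])
  moreover have "card ((\<lambda>j. {Inr j :: point}) ` {0..<nfree D}) = nfree D"
    by (subst card_image) (auto intro: inj_onI)
  moreover have "(\<lambda>C. Inl ` C) ` (?X // ?R) \<inter> (\<lambda>j. {Inr j :: point}) ` {0..<nfree D} = {}" by auto
  moreover have "finite ((\<lambda>C. Inl ` C) ` (?X // ?R))" using finite_endpoints by (simp add: quotient_img)
  moreover have "finite ((\<lambda>j. {Inr j :: point}) ` {0..<nfree D})" by simp
  ultimately show ?thesis unfolding Ob_def using card_Un_disjoint by metis
qed

lemma merging_iff:
  assumes i: "i < ncr D"
  shows "merging D w i \<longleftrightarrow> ((i,0),(i,1)) \<notin> cl (Rel (smf w))"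
proof -
  let ?R = "cl (Rel (smf w))"
  have inj: "inj (Inl :: nat \<times> nat \<Rightarrow> point)" by (auto intro: injI)
  have "circle_of D w (Inl (i,0)) = Inl ` (?R `` {(i,0)})" "circle_of D w (Inl (i,1)) = Inl ` (?R `` {(i,1)})"
    unfolding circle_of_def smooth_rel_img by (rule cl_img_class[OF inj])+
  hence "merging D w i \<longleftrightarrow> ?R `` {(i,0)} \<noteq> ?R `` {(i,1)}"
    unfolding merging_def by (simp add: inj_image_eq_iff[OF inj])
  also have "\<dots> \<longleftrightarrow> ((i,0),(i,1)) \<notin> ?R"
  proof
    assume "?R `` {(i,0)} \<noteq> ?R `` {(i,1)}"
    thus "((i,0),(i,1)) \<notin> ?R" using cl_class_eq[of "(i,0)" "(i,1)" "Rel (smf w)"] by (rule contrapos_nn)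
  next
    assume h: "((i,0),(i,1)) \<notin> ?R"
    show "?R `` {(i,0)} \<noteq> ?R `` {(i,1)}"
    proof
      assume "?R `` {(i,0)} = ?R `` {(i,1)}"
      hence "(i,1) \<in> ?R `` {(i,0)}" by simp
      thus False using h by simp
    qed
  qed
  finally show ?thesis .
qed

end

lemma cl_trans3: "(a,b) \<in> cl R \<Longrightarrow> (b,c) \<in> cl R \<Longrightarrow> (c,d) \<in> cl R \<Longrightarrow> (a,d) \<in> cl R"
  by (rule cl_trans[OF cl_trans])

context perm_on
begin

lemma U:
  assumes a: "a \<in> X" and b: "b \<in> X" and g: "\<And>x. x \<in> X \<Longrightarrow> g x = f (sw a b x)"
    and xy: "(x,y) \<in> cl (fedges X f)" and xa: "(x,a) \<notin> cl (fedges X f)" and xb: "(x,b) \<notin> cl (fedges X f)"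
  shows "(x,y) \<in> cl (fedges X g)"
proof -
  let ?E = "fedges (X - {a,b}) f"
  let ?R1 = "insert (b, f b) ?E"
  have ef: "fedges X f = insert (a, f a) ?R1" by (rule fedges_split[OF a b])
  have R1sub: "cl ?R1 \<subseteq> cl (fedges X f)" unfolding ef by (rule cl_mono) auto
  have Esub: "cl ?E \<subseteq> cl ?R1" by (rule cl_mono) auto
  have faa: "(f a, a) \<in> cl (fedges X f)" by (rule fedges_cl'[OF a])
  have fbb: "(f b, b) \<in> cl (fedges X f)" by (rule fedges_cl'[OF b])
  have "(x,y) \<in> cl (insert (a, f a) ?R1)" using xy unfolding ef .
  hence "(x,y) \<in> cl ?R1 \<or> ((x,a) \<in> cl ?R1 \<and> (f a, y) \<in> cl ?R1) \<or> ((x, f a) \<in> cl ?R1 \<and> (a,y) \<in> cl ?R1)"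
    by (rule cl_insert[THEN iffD1])
  moreover have "(x,a) \<notin> cl ?R1" using xa R1sub by blast
  moreover have "(x, f a) \<notin> cl ?R1"
  proof
    assume "(x, f a) \<in> cl ?R1"
    hence "(x, f a) \<in> cl (fedges X f)" using R1sub by blast
    hence "(x, a) \<in> cl (fedges X f)" using faa by (rule cl_trans)
    thus False using xa by simp
  qed
  ultimately have h1: "(x,y) \<in> cl ?R1" by blast
  hence "(x,y) \<in> cl ?E \<or> ((x,b) \<in> cl ?E \<and> (f b, y) \<in> cl ?E) \<or> ((x, f b) \<in> cl ?E \<and> (b,y) \<in> cl ?E)"
    by (rule cl_insert[THEN iffD1])
  moreover have "(x,b) \<notin> cl ?E" using xb R1sub Esub by blast
  moreover have "(x, f b) \<notin> cl ?E"
  proof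
    assume "(x, f b) \<in> cl ?E"
    hence "(x, f b) \<in> cl (fedges X f)" using R1sub Esub by blast
    hence "(x, b) \<in> cl (fedges X f)" using fbb by (rule cl_trans)
    thus False using xb by simp
  qed
  ultimately have "(x,y) \<in> cl ?E" by blast
  moreover have "cl ?E \<subseteq> cl (fedges X g)"
  proof (rule cl_mono)
    show "?E \<subseteq> fedges X g" unfolding fedges_def using g by (auto simp: sw_def)
  qed
  ultimately show ?thesis by blast
qed

lemma Lsub:
  assumes a: "a \<in> X" and b: "b \<in> X" and g: "\<And>x. x \<in> X \<Longrightarrow> g x = f (sw a b x)"
  shows "cl (fedges X g) \<subseteq> cl (insert (a,b) (fedges X f))"
proof (rule cl_sub)
  let ?C = "cl (insert (a,b) (fedges X f))"
  have sub: "cl (fedges X f) \<subseteq> ?C" by (rule cl_mono) auto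
  have ab: "(a,b) \<in> ?C" by (rule cl_base) simp
  show "fedges X g \<subseteq> ?C"
  proof
    fix p assume "p \<in> fedges X g"
    then obtain x where x: "x \<in> X" "p = (x, g x)" unfolding fedges_def by auto
    show "p \<in> ?C"
    proof (cases "x = a")
      case True
      have "(b, f b) \<in> ?C" using sub fedges_cl[OF b] by blast
      hence "(a, f b) \<in> ?C" using ab by (rule cl_trans[rotated])
      thus ?thesis using x True g[OF a] by (simp add: sw_def)
    next
      case False note xa = False
      show ?thesis
      proof (cases "x = b")
        case True
        have "(a, f a) \<in> ?C" using sub fedges_cl[OF a] by blast
        hence "(b, f a) \<in> ?C" using cl_sym[OF ab] by (rule cl_trans[rotated])
        thus ?thesis using x True xa g[OF b] by (simp add: sw_def)
      next
        case False
        have "(x, f x) \<in> ?C" using sub fedges_cl[OF x(1)] by blast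
        thus ?thesis using x False xa g[OF x(1)] by (simp add: sw_def)
      qed
    qed
  qed
qed

end

context invol
begin

lemma comp_sw:
  assumes a: "a \<in> X" and b: "b \<in> X" and s': "\<And>x. x \<in> X \<Longrightarrow> s' x = s (sw a b x)" and x: "x \<in> X"
  shows "(s' \<circ> al) x = (s \<circ> al) (sw (al a) (al b) x)"
proof -
  have alx: "al x \<in> X" by (rule al_in[OF x])
  show ?thesis
  proof (cases "x = al a")
    case True then show ?thesis using s'[OF a] al_al[OF a] al_al[OF b] by (simp add: sw_def)
  next
    case False note xa = False
    show ?thesis
    proof (cases "x = al b")
      case True
      hence "al x = b" using al_al[OF b] by simp
      then show ?thesis using True xa s'[OF b] al_al[OF a] by (auto simp: sw_def)
    next
      case False
      have "al x \<noteq> a" using xa al_al[OF x] by auto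
      moreover have "al x \<noteq> b" using False al_al[OF x] by auto
      ultimately show ?thesis using xa False s'[OF alx] by (simp add: sw_def)
    qed
  qed
qed

end

context diag
begin

lemma state_upd: "state D w \<Longrightarrow> state D (w[i := 0])"
  unfolding state_def using set_update_subset_insert[of w i 0] by auto

lemma Zchange:
  assumes st: "state D w" and i: "i < ncr D" and wi: "w ! i = 1"
  shows "int (Ob (smf (w[i := 0]))) = int (Ob (smf w)) + (if ((i,0),(i,1)) \<in> cl (Rel (smf w)) then 1 else -1)"
proof -
  let ?X = "endpoints D"
  define v where "v = w[i := 0]"
  have stv: "state D v" unfolding v_def by (rule state_upd[OF st])
  have len: "length w = ncr D" by (rule state_len[OF st])
  have vi: "v ! i = 0" unfolding v_def using len i by simp
  define S0 where "S0 = {0..<ncr D} - {i}"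
  define K where "K = sm w S0"
  have iS0: "i \<notin> S0" unfolding S0_def by simp
  have S0sub: "S0 \<subseteq> {0..<ncr D}" unfolding S0_def by auto
  have ins: "insert i S0 = {0..<ncr D}" unfolding S0_def using i by auto
  have Kv: "sm v S0 = K" unfolding K_def
  proof (rule ext)
    fix e show "sm v S0 e = sm w S0 e"
    proof (cases "fst e \<in> S0")
      case True
      hence "fst e \<noteq> i" using iS0 by auto
      thus ?thesis unfolding sm_def v_def using True by simp
    qed (simp add: sm_def)
  qed
  have wi01: "w ! i \<in> {0,1}" using wi by simp
  have vi01: "v ! i \<in> {0,1}" using vi by simp
  have ppw: "pp w i = (i,0)" "qq w i = (i,2)" unfolding pp_def qq_def using wi by auto
  have ppv: "pp v i = (i,1)" "qq v i = (i,3)" unfolding pp_def qq_def using vi by auto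
  have hw: "smf w x = K (sw (i,0) (i,2) x)" if x: "x \<in> ?X" for x
    using sm_step[OF iS0 x wi01] unfolding ins ppw K_def .
  have hv: "smf v x = K (sw (i,1) (i,3) x)" if x: "x \<in> ?X" for x
    using sm_step[OF iS0 x vi01] unfolding ins ppv Kv .
  have X4: "(i,k) \<in> ?X" if "k < 4" for k using i that unfolding endpoints_mem by simp
  have i0: "(i,0) \<in> ?X" and i1: "(i,1) \<in> ?X" and i2: "(i,2) \<in> ?X" and i3: "(i,3) \<in> ?X"
    using X4 by auto
  have Kw: "K x = smf w (sw (i,0) (i,2) x)" if x: "x \<in> ?X" for x
  proof -
    have "sw (i,0) (i,2) x \<in> ?X" using x i0 i2 by (auto simp: sw_def)
    hence "smf w (sw (i,0) (i,2) x) = K (sw (i,0) (i,2) (sw (i,0) (i,2) x))" by (rule hw)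
    thus ?thesis by (simp add: sw_def split: if_splits)
  qed
  have Kbij: "bij_betw K ?X ?X" unfolding K_def by (rule sm_bij)
  have c02K: "((i,0),(i,2)) \<in> cl (fedges ?X K)"
    using step_cl[OF iS0 i, of w] unfolding ppw K_def .
  have ch: "Vc K = ncr D + card S0 \<and> 2 * int (Ob K) - int (Vc K) - int (Fc K) \<le> - 2 * int (ncr D)"
    unfolding K_def by (rule chain[OF st S0sub])
  have cS0: "card S0 = ncr D - 1" unfolding S0_def using i by simp
  have ObK: "((i,0),(i,2)) \<in> cl (Rel (smf w)) \<Longrightarrow> Ob (smf w) = Ob K"
    using step_S(4)[OF Kbij i0 i2 _ c02K hw] by simp
  let ?pw = "smf w \<circ> arc D" and ?pK = "K \<circ> arc D" and ?pv = "smf v \<circ> arc D"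
  interpret PW: perm_on ?X ?pw by unfold_locales (rule finite_endpoints, rule comp_bij[OF sm_bij])
  interpret PK: perm_on ?X ?pK by unfold_locales (rule finite_endpoints, rule comp_bij[OF Kbij])
  let ?a = "arc D (i,0)" and ?b = "arc D (i,2)" and ?c = "arc D (i,1)" and ?d = "arc D (i,3)"
  have aX: "?a \<in> ?X" "?b \<in> ?X" "?c \<in> ?X" "?d \<in> ?X" using arc_in i0 i1 i2 i3 by auto
  have ab: "?a \<noteq> ?b" using arc_arc[OF i0] arc_arc[OF i2] by fastforce
  have cd: "?c \<noteq> ?d" using arc_arc[OF i1] arc_arc[OF i3] by fastforce
  have gK: "?pK x = ?pw (sw ?a ?b x)" if "x \<in> ?X" for x
    by (rule comp_sw[where s'=K and s="smf w", OF i0 i2 Kw that])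
  have gv: "?pv x = ?pK (sw ?c ?d x)" if "x \<in> ?X" for x
    by (rule comp_sw[where s'="smf v" and s=K, OF i1 i3 hv that])
  interpret W: fullst ?X "arc D" "smf w" by (rule fullst_smf)
  have Wpi: "W.pi = ?pw" by (simp add: W.pi_def)
  let ?Cw = "cl (fedges ?X ?pw)" and ?CK = "cl (fedges ?X ?pK)" and ?Rw = "cl (Rel (smf w))"
  have Fw: "Fc (smf w) = 2 * Ob (smf w)" by (rule Fc_full)
  have Fv: "Fc (smf v) = 2 * Ob (smf v)" by (rule Fc_full)
  have smw: "smf w (i,0) = (i,3)" "smf w (i,1) = (i,2)" "smf w (i,2) = (i,1)" "smf w (i,3) = (i,0)"
    using i wi unfolding sm_def partner_def by auto
  have f1: "(?a, (i,3)) \<in> ?Cw" using fedges_cl[OF aX(1), of ?pw] arc_arc[OF i0] smw by simp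
  have f2: "(?d, (i,0)) \<in> ?Cw" using fedges_cl[OF aX(4), of ?pw] arc_arc[OF i3] smw by simp
  have f3: "(?c, (i,2)) \<in> ?Cw" using fedges_cl[OF aX(3), of ?pw] arc_arc[OF i1] smw by simp
  have f4: "(?b, (i,1)) \<in> ?Cw" using fedges_cl[OF aX(2), of ?pw] arc_arc[OF i2] smw by simp
  have f5a: "((i,0),(i,3)) \<notin> ?Cw" using W.EO1[OF i0] smw unfolding Wpi by simp
  have f5b: "((i,1),(i,2)) \<notin> ?Cw" using W.EO1[OF i1] smw unfolding Wpi by simp
  have CR: "?Cw \<subseteq> ?Rw" by (rule cl_comp_sub)
  have f7a: "((i,0),(i,3)) \<in> ?Rw" using s_cl[OF i0, of "smf w"] smw by simp
  have f7b: "((i,1),(i,2)) \<in> ?Rw" using s_cl[OF i1, of "smf w"] smw by simp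
  have FK_def: "Fc K = card (?X // ?CK)" unfolding Fc_def ..
  have Fw_def: "Fc (smf w) = card (?X // ?Cw)" unfolding Fc_def ..
  have Fv_def: "Fc (smf v) = card (?X // cl (fedges ?X ?pv))" unfolding Fc_def ..
  show ?thesis
  proof (cases "((i,0),(i,1)) \<in> ?Rw")
    case False
    have nab: "(?a, ?b) \<notin> ?Cw"
    proof
      assume "(?a, ?b) \<in> ?Cw"
      hence "((i,3),(i,1)) \<in> ?Cw" by (rule cl_trans3[OF cl_sym[OF f1] _ f4])
      hence "((i,3),(i,1)) \<in> ?Rw" using CR by (rule subsetD[rotated])
      hence "((i,0),(i,1)) \<in> ?Rw" using f7a by (rule cl_trans[rotated])
      thus False using False by simp
    qed
    note t1 = PW.transp(2)[where g="K \<circ> arc D", OF aX(1) aX(2) ab gK nab]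
    have ncd: "(?c, ?d) \<notin> ?CK"
    proof
      assume "(?c, ?d) \<in> ?CK"
      hence "(?c, ?d) \<in> cl (insert (?a, ?b) (fedges ?X ?pw))" using PW.Lsub[where g="K \<circ> arc D", OF aX(1) aX(2) gK] by (rule subsetD[rotated])
      hence cs: "(?c, ?d) \<in> ?Cw \<or> ((?c, ?a) \<in> ?Cw \<and> (?b, ?d) \<in> ?Cw) \<or> ((?c, ?b) \<in> ?Cw \<and> (?a, ?d) \<in> ?Cw)"
        by (rule cl_insert[THEN iffD1])
      show False
      proof -
        { assume "(?c, ?d) \<in> ?Cw"
          hence "((i,2),(i,0)) \<in> ?Cw" by (rule cl_trans3[OF cl_sym[OF f3] _ f2])
          hence h: "((i,2),(i,0)) \<in> ?Rw" using CR by (rule subsetD[rotated])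
          have "((i,0),(i,1)) \<in> ?Rw" using cl_trans[OF cl_sym[OF h] cl_sym[OF f7b]] by simp
          hence False using False by simp }
        moreover
        { assume "(?c, ?a) \<in> ?Cw"
          hence "((i,2),(i,3)) \<in> ?Cw" by (rule cl_trans3[OF cl_sym[OF f3] _ f1])
          hence h: "((i,2),(i,3)) \<in> ?Rw" using CR by (rule subsetD[rotated])
          have "((i,0),(i,1)) \<in> ?Rw" using cl_trans3[OF f7a cl_sym[OF h] cl_sym[OF f7b]] by simp
          hence False using False by simp }
        moreover
        { assume "(?c, ?b) \<in> ?Cw"
          hence "((i,2),(i,1)) \<in> ?Cw" by (rule cl_trans3[OF cl_sym[OF f3] _ f4])
          hence "((i,1),(i,2)) \<in> ?Cw" by (rule cl_sym)
          hence False using f5b by simp }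
        ultimately show False using cs by blast
      qed
    qed
    note t2 = PK.transp(2)[where g="smf v \<circ> arc D", OF aX(3) aX(4) cd gv ncd]
    have "Fc (smf v) + 2 = Fc (smf w)" using t1 t2 FK_def Fw_def Fv_def by simp
    hence "Ob (smf v) + 1 = Ob (smf w)" using Fw Fv by simp
    thus ?thesis using False unfolding v_def by simp
  next
    case True
    have i02R: "((i,0),(i,2)) \<in> ?Rw" using cl_trans[OF True f7b] .
    show ?thesis
    proof (cases "(?a, ?b) \<in> ?Cw")
      case True
      note t1 = PW.transp(1)[where g="K \<circ> arc D", OF aX(1) aX(2) ab gK True]
      have i02C: "((i,0),(i,2)) \<in> ?Cw"
      proof -
        from W.EO2[OF i0 i02R] have "((i,0),(i,2)) \<in> ?Cw \<or> ((i,3),(i,2)) \<in> ?Cw"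
          unfolding Wpi using smw by simp
        moreover have "((i,3),(i,2)) \<notin> ?Cw"
        proof
          assume h: "((i,3),(i,2)) \<in> ?Cw"
          have "((i,3),(i,1)) \<in> ?Cw" using cl_trans3[OF cl_sym[OF f1] True f4] .
          hence "((i,2),(i,1)) \<in> ?Cw" using cl_sym[OF h] by (rule cl_trans[rotated])
          hence "((i,1),(i,2)) \<in> ?Cw" by (rule cl_sym)
          thus False using f5b by simp
        qed
        ultimately show ?thesis by blast
      qed
      have i0c: "((i,0), ?c) \<in> ?Cw" using cl_trans[OF i02C cl_sym[OF f3]] .
      have cdw: "(?c, ?d) \<in> ?Cw" using cl_trans[OF cl_sym[OF i0c] cl_sym[OF f2]] .
      have nca: "(?c, ?a) \<notin> ?Cw"
      proof
        assume "(?c, ?a) \<in> ?Cw"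
        hence "((i,0),(i,3)) \<in> ?Cw" by (rule cl_trans3[OF i0c _ f1])
        thus False using f5a by simp
      qed
      have ncb: "(?c, ?b) \<notin> ?Cw"
      proof
        assume "(?c, ?b) \<in> ?Cw"
        hence "(?c, ?a) \<in> ?Cw" using cl_sym[OF True] by (rule cl_trans)
        thus False using nca by simp
      qed
      have cdK: "(?c, ?d) \<in> ?CK" by (rule PW.U[where g="K \<circ> arc D", OF aX(1) aX(2) gK cdw nca ncb])
      note t2 = PK.transp(1)[where g="smf v \<circ> arc D", OF aX(3) aX(4) cd gv cdK]
      have "Fc (smf v) = Fc (smf w) + 2" using t1 t2 FK_def Fw_def Fv_def by simp
      hence "Ob (smf v) = Ob (smf w) + 1" using Fw Fv by simp
      thus ?thesis using \<open>((i,0),(i,1)) \<in> ?Rw\<close> unfolding v_def by simp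
    next
      case False
      note t1 = PW.transp(2)[where g="K \<circ> arc D", OF aX(1) aX(2) ab gK False]
      have "Fc K + 1 = 2 * Ob K" using t1 FK_def Fw_def Fw ObK[OF i02R] by simp
      hence f: "int (Fc K) + 1 = 2 * int (Ob K)" by linarith
      have "Vc K = ncr D + (ncr D - 1)" using ch cS0 by simp
      hence "int (Vc K) = 2 * int (ncr D) - 1" using i by linarith
      hence False using ch f by linarith
      thus ?thesis ..
    qed
  qed
qed

end

lemma sum_upd: "k < length xs \<Longrightarrow> sum_list (xs[k := 0]) + xs ! k = (sum_list xs :: nat)"
proof (induction xs arbitrary: k)
  case Nil then show ?case by simp
next
  case (Cons a xs)
  then show ?case by (cases k) auto
qed

lemma cs_len: "length (chain_state u k) = length u" unfolding chain_state_def by simp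
lemma cs_nth: "j < length u \<Longrightarrow> chain_state u k ! j = (if j < k then u ! j else 1)"
  unfolding chain_state_def by simp
lemma cs_0: "chain_state u 0 = replicate (length u) 1"
  by (rule nth_equalityI) (simp_all add: cs_len cs_nth)
lemma cs_full: "chain_state u (length u) = u"
  by (rule nth_equalityI) (simp_all add: cs_len cs_nth)
lemma cs_Suc0: "k < length u \<Longrightarrow> u ! k = 0 \<Longrightarrow> chain_state u (Suc k) = (chain_state u k)[k := 0]"
  by (rule nth_equalityI) (auto simp: cs_len cs_nth nth_list_update)
lemma cs_Suc1: "u ! k \<noteq> 0 \<Longrightarrow> state D u \<Longrightarrow> chain_state u (Suc k) = chain_state u k"
proof (rule nth_equalityI)
  assume uk: "u ! k \<noteq> 0" and st: "state D u"
  show "length (chain_state u (Suc k)) = length (chain_state u k)" by (simp add: cs_len)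
  fix j assume j: "j < length (chain_state u (Suc k))"
  show "chain_state u (Suc k) ! j = chain_state u k ! j"
  proof (cases "j = k")
    case True
    have "u ! k \<in> set u" using j True by (simp add: cs_len)
    hence "u ! k = 1" using uk st unfolding state_def by auto
    then show ?thesis using j True by (simp add: cs_len cs_nth)
  next
    case False
    then show ?thesis using j by (simp add: cs_len cs_nth)
  qed
qed

lemma cs_state: assumes st: "state D u" shows "state D (chain_state u k)"
proof -
  have "set (chain_state u k) \<subseteq> {0,1}"
  proof
    fix y assume "y \<in> set (chain_state u k)"
    then obtain j where j: "j < length u" "y = chain_state u k ! j" by (auto simp: in_set_conv_nth cs_len)
    show "y \<in> {0,1}"
    proof (cases "j < k")
      case True
      hence "y = u ! j" using j by (simp add: cs_nth)
      moreover have "u ! j \<in> set u" using j by simp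
      ultimately show ?thesis using st unfolding state_def by auto
    next
      case False then show ?thesis using j by (simp add: cs_nth)
    qed
  qed
  thus ?thesis using st unfolding state_def by (simp add: cs_len)
qed

context diag
begin

lemma Zc:
  assumes st: "state D w" and i: "i < ncr D" and wi: "w ! i = 1"
  shows "int (card (circles D (w[i := 0]))) = int (card (circles D w)) + (if merging D w i then -1 else 1)"
  using Zchange[OF st i wi] merging_iff[OF i, of w] circles_card[of w] circles_card[of "w[i := 0]"]
  by simp

definition ones where "ones = replicate (ncr D) (1::nat)"

lemma Nform:
  assumes st: "state D u"
  shows "int (sum_list u) + int (card (circles D u)) + 2 * int (Phi D u) = int (ncr D) + int (card (circles D ones))"
proof -
  have len: "length u = ncr D" by (rule state_len[OF st])
  define M where "M k = {j. j < k \<and> u ! j = 0 \<and> merging D (chain_state u j) j}" for k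
  have main: "k \<le> length u \<Longrightarrow> int (sum_list (chain_state u k)) + int (card (circles D (chain_state u k)))
      + 2 * int (card (M k)) = int (ncr D) + int (card (circles D ones))" for k
  proof (induction k)
    case 0
    have "M 0 = {}" unfolding M_def by simp
    then show ?case unfolding cs_0 ones_def len by (simp add: sum_list_replicate)
  next
    case (Suc k)
    hence k: "k < length u" by simp
    note IH = Suc.IH[OF less_imp_le[OF k]]
    show ?case
    proof (cases "u ! k = 0")
      case True
      let ?c = "chain_state u k"
      have c1: "?c ! k = 1" using k by (simp add: cs_nth)
      have stc: "state D ?c" by (rule cs_state[OF st])
      have kn: "k < ncr D" using k len by simp
      have eq: "chain_state u (Suc k) = ?c[k := 0]" by (rule cs_Suc0[OF k True])
      have sum: "sum_list (?c[k := 0]) + 1 = sum_list ?c" using sum_upd[of k ?c] c1 k by (simp add: cs_len)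
      have Mk: "M (Suc k) = (if merging D ?c k then insert k (M k) else M k)"
        unfolding M_def using True by (auto simp: less_Suc_eq)
      have kM: "k \<notin> M k" unfolding M_def by simp
      have finM: "finite (M k)" unfolding M_def by simp
      have cM: "card (M (Suc k)) = card (M k) + (if merging D ?c k then 1 else 0)"
        using Mk kM finM by simp
      show ?thesis using IH Zc[OF stc kn c1] sum cM unfolding eq by (simp split: if_splits)
    next
      case False
      have eq: "chain_state u (Suc k) = chain_state u k" by (rule cs_Suc1[OF False st])
      have "M (Suc k) = M k" unfolding M_def using False by (auto simp: less_Suc_eq)
      then show ?thesis using IH eq by simp
    qed
  qed
  have "M (length u) = {k. k < length u \<and> u ! k = 0 \<and> merging D (chain_state u k) k}" unfolding M_def ..
  hence "card (M (length u)) = Phi D u" unfolding Phi_def by simp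
  thus ?thesis using main[OF order_refl] unfolding cs_full by simp
qed

lemma ones_state: "state D ones" unfolding ones_def state_def by auto

lemma Phi_ones: "Phi D ones = 0"
  using Nform[OF ones_state] unfolding ones_def by (simp add: sum_list_replicate)

lemma finite_circles: "finite (circles D w)"
  unfolding circles_def points_def quotient_img using finite_endpoints by simp

lemma card_circles_le: "card (circles D w) \<le> card (endpoints D) + nfree D"
proof -
  have "Ob (smf w) \<le> card (endpoints D)" unfolding Ob_def quotient_img by (rule card_image_le[OF finite_endpoints])
  thus ?thesis using circles_card[of w] by simp
qed

lemma Phi_le: "Phi D u \<le> length u"
proof -
  have "{k. k < length u \<and> u ! k = 0 \<and> merging D (chain_state u k) k} \<subseteq> {..<length u}" by auto
  thus ?thesis unfolding Phi_def using card_mono[of "{..<length u}"] by fastforce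
qed

lemma qdeg_form:
  assumes st: "state D u" and en: "enhancement D u x"
  shows "qdeg D u x = int (n_plus D) - 2 * int (n_minus D) + int (ncr D) + int (card (circles D ones))
     - 2 * int (Phi D u) - 2 * int (card {z \<in> circles D u. x z = -1})"
proof -
  let ?P = "{z \<in> circles D u. x z = 1}" and ?M = "{z \<in> circles D u. x z = -1}"
  have un: "circles D u = ?P \<union> ?M" using en unfolding enhancement_def by auto
  have dj: "?P \<inter> ?M = {}" by auto
  have fP: "finite ?P" using finite_circles by simp
  have fM: "finite ?M" using finite_circles by simp
  have "card (?P \<union> ?M) = card ?P + card ?M" by (rule card_Un_disjoint[OF fP fM dj])
  hence c: "int (card (circles D u)) = int (card ?P) + int (card ?M)" unfolding un[symmetric] by simp
  have "qdeg D u x = int (n_plus D) - 2 * int (n_minus D) + int (sum_list u) + int (card ?P) - int (card ?M)"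
    unfolding qdeg_def ..
  thus ?thesis using Nform[OF st] c by linarith
qed

lemma jmax_val:
  "jmax D = int (n_plus D) - 2 * int (n_minus D) + int (ncr D) + int (card (circles D ones))"
proof -
  let ?T = "int (n_plus D) - 2 * int (n_minus D) + int (ncr D) + int (card (circles D ones))"
  let ?S = "{qdeg D u x | u x. state D u \<and> enhancement D u x}"
  let ?B = "int (ncr D) + int (card (endpoints D)) + int (nfree D)"
  have bnd: "?T - 2 * ?B \<le> q \<and> q \<le> ?T" if qS: "q \<in> ?S" for q
  proof -
    obtain u x where ux: "q = qdeg D u x" "state D u" "enhancement D u x" using qS by blast
    have "card {z \<in> circles D u. x z = -1} \<le> card (circles D u)"
      by (rule card_mono[OF finite_circles]) auto
    hence m: "card {z \<in> circles D u. x z = -1} \<le> card (endpoints D) + nfree D"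
      using card_circles_le[of u] by simp
    have p: "Phi D u \<le> ncr D" using Phi_le[of u] state_len[OF ux(2)] by simp
    have m': "int (card {z \<in> circles D u. x z = -1}) \<le> int (card (endpoints D)) + int (nfree D)"
      using m by linarith
    have p': "int (Phi D u) \<le> int (ncr D)" using p by linarith
    obtain mm where mm: "mm = int (card {z \<in> circles D u. x z = -1})" by simp
    have e: "q = ?T - 2 * int (Phi D u) - 2 * mm" using qdeg_form[OF ux(2) ux(3)] ux(1) mm by simp
    have m'': "mm \<le> int (card (endpoints D)) + int (nfree D)" using m' mm by simp
    have q1: "?T - 2 * ?B \<le> q" unfolding e using m'' p' by (simp add: algebra_simps)
    have q2: "q \<le> ?T" using qdeg_form[OF ux(2) ux(3)] ux(1) by linarith
    show ?thesis using q1 q2 by (rule conjI)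
  qed
  have fin: "finite ?S"
  proof (rule finite_subset)
    show "?S \<subseteq> {?T - 2 * ?B .. ?T}"
    proof
      fix q assume "q \<in> ?S"
      from bnd[OF this] show "q \<in> {?T - 2 * ?B .. ?T}" by simp
    qed
  qed simp
  have en1: "enhancement D ones (\<lambda>_. 1)" unfolding enhancement_def by simp
  have "qdeg D ones (\<lambda>_. 1) = ?T" using qdeg_form[OF ones_state en1] Phi_ones by simp
  hence mem: "?T \<in> ?S" using ones_state en1 by force
  have "Max ?S = ?T"
  proof (rule Max_eqI[OF fin])
    fix q assume "q \<in> ?S"
    from bnd[OF this] show "q \<le> ?T" by simp
  next
    show "?T \<in> ?S" by (rule mem)
  qed
  thus ?thesis unfolding jmax_def .
qed

end

theorem corollary4p5:
  assumes "diagram D" and "state D u" and "enhancement D u x"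
    and "qdeg D u x = jmax D - 2"
  shows "Phi D u \<le> 1
    \<and> (Phi D u = 0 \<longrightarrow> (\<exists>z \<in> circles D u. x z = -1 \<and> (\<forall>w \<in> circles D u. w \<noteq> z \<longrightarrow> x w = 1)))
    \<and> (Phi D u = 1 \<longrightarrow> (\<forall>z \<in> circles D u. x z = 1))"
proof -
  interpret diag D by unfold_locales (rule assms(1))
  let ?M = "{z \<in> circles D u. x z = -1}"
  have key: "Phi D u + card ?M = 1"
    using qdeg_form[OF assms(2) assms(3)] jmax_val assms(4) by linarith
  have finM: "finite ?M" using finite_circles by simp
  have en: "\<And>z. z \<in> circles D u \<Longrightarrow> x z = 1 \<or> x z = -1" using assms(3) unfolding enhancement_def by blast
  show ?thesis
  proof (intro conjI impI)
    show "Phi D u \<le> 1" using key by simp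
  next
    assume "Phi D u = 0"
    hence "card ?M = 1" using key by simp
    then obtain z where z: "?M = {z}" by (auto simp: card_Suc_eq)
    show "\<exists>z \<in> circles D u. x z = -1 \<and> (\<forall>w \<in> circles D u. w \<noteq> z \<longrightarrow> x w = 1)"
    proof (intro bexI conjI ballI impI)
      show "z \<in> circles D u" "x z = -1" using z by auto
      fix w assume w: "w \<in> circles D u" "w \<noteq> z"
      hence "w \<notin> ?M" using z by auto
      thus "x w = 1" using en[OF w(1)] w(1) by auto
    qed
  next
    assume "Phi D u = 1"
    hence "card ?M = 0" using key by simp
    hence "?M = {}" using finM by simp
    thus "\<forall>z \<in> circles D u. x z = 1" using en by auto
  qed
qed

end
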